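(* Let $a\in\mathbb{R}_{<0}$ and let $(a_1,a_2)$ satisfy one of: $a_1=0$, $a_2\in\mathbb{R}_{<0}$; or $a_1=-1-x+iy$, $a_2=x+iy$ with $-1\le x<0$, $y\in\mathbb{R}_{>0}$; or $-1<a_1,a_2<0$. Let $V$ be the Hilbert tensor product of $N(a_1,a_2)$ and $N(a,0)$ (described in the context). If a simple lowest weight module $N(0,-\lambda)$, of lowest weight $\lambda$, is a Hilbert submodule of $V$, then $\lambda=a_1+a-a_2+2n_0$ for some integer $n_0$. Conversely: (1) if $a_1=0$, then for $n_0\in\mathbb{Z}$ the module $N(0,-a+a_2-2n_0)$, of lowest weight $a-a_2+2n_0$, is a Hilbert submodule of $V$ if and only if $1+a_2-a<2n_0\le0$; (2) if $a_1\neq0$, then for no integer $n_0$ does $V$ have a Hilbert submodule isomorphic to $N(0,-a_1-a+a_2-2n_0)$.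
   Context: $\mathfrak{sl}(2,\mathbb{C})$ has basis $H,E,F$ with $[H,E]=2E$, $[H,F]=-2F$, $[E,F]=H$. For $(c_1,c_2)\in\mathbb{C}^2$ let $\mathcal{K}(c_1,c_2)$ be the set of $k\in\mathbb{Z}$ such that for each $i$ with $c_i\in\mathbb{Z}$ one has ($c_i+(-1)^{i-1}k<0$ iff $c_i<0$). $N(c_1,c_2)$ has basis $\{x(k):k\in\mathcal{K}(c_1,c_2)\}$ ($x(k):=0$ otherwise), $H x(k)=(c_1-c_2+2k)x(k)$, and: (I) neither $c_i$ a negative integer: $E x(k)=(c_2-k)x(k+1)$, $F x(k)=(c_1+k)x(k-1)$; (II) only $c_2$ a negative integer: $E x(k)=x(k+1)$, $F x(k)=(c_1+k)(c_2-k+1)x(k-1)$; (III) only $c_1$ a negative integer: $E x(k)=(c_1+k+1)(c_2-k)x(k+1)$, $F x(k)=x(k-1)$; (IV) both: $E x(k)=(c_1+k+1)x(k+1)$, $F x(k)=(c_2-k+1)x(k-1)$. Hilbert structures: on $N(a_1,a_2)$ the $x(k)$ are orthogonal, $\|x(0)\|=1$, and for $k>0$: if $a_2$ is not a negative integer, $\|x(k)\|^2=\prod_{j=1}^k\frac{j+a_1}{j-1-\bar a_2}$ and (when $a_1\neq0$) $\|x(-k)\|^2=\prod_{j=1}^k\frac{j+\bar a_2}{j-1-a_1}$; if $a_1=0$ and $a_2\in\mathbb{Z}_{<0}$, $\|x(k)\|^2=k!\prod_{j=1}^k(j-1-a_2)$. On $N(a,0)$ put $y(l)=x(-l)$, $l\in\mathbb{Z}_{\ge0}$,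 orthogonal with $\|y(0)\|=1$ and $\|y(l)\|^2=l!/\prod_{j=1}^l(j-1-a)$ if $a\notin\mathbb{Z}$, $\|y(l)\|^2=l!\prod_{j=1}^l(j-1-a)$ if $a\in\mathbb{Z}$. With $z(k,l)=x(k)\otimes y(l)$, $V=\{\sum u_{k,l}z(k,l):\sum|u_{k,l}|^2\|x(k)\|^2\|y(l)\|^2<\infty\}$. $H,E,F$ act on formal sums $\sum u_{k,l}z(k,l)$ termwise via $X(v\otimes w)=Xv\otimes w+v\otimes Xw$. A $\mathfrak{sl}(2,\mathbb{C})$-module $M$ is a Hilbert submodule of $V$ if there is an injective module homomorphism from $M$ into the module of such formal sums with image contained in $V$. *)

theory Defs
  imports "HOL-Analysis.Analysis"
begin

datatype sl2 = H | E | F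

definition negint :: "complex \<Rightarrow> bool" where
  "negint c \<longleftrightarrow> c \<in> \<int> \<and> Re c < 0"

definition Kset :: "complex \<Rightarrow> complex \<Rightarrow> int set" where
  "Kset c1 c2 = {k. (c1 \<in> \<int> \<longrightarrow> (Re (c1 + of_int k) < 0 \<longleftrightarrow> Re c1 < 0)) \<and>
                    (c2 \<in> \<int> \<longrightarrow> (Re (c2 - of_int k) < 0 \<longleftrightarrow> Re c2 < 0))}"

text \<open>Coefficients: H x(k) = hN k x(k), E x(k) = eN k x(k+1), F x(k) = fN k x(k-1).\<close>
definition hN :: "complex \<Rightarrow> complex \<Rightarrow> int \<Rightarrow> complex" where
  "hN c1 c2 k = c1 - c2 + 2 * of_int k"

definition eN :: "complex \<Rightarrow> complex \<Rightarrow> int \<Rightarrow> complex" where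
  "eN c1 c2 k =
     (if \<not> negint c1 \<and> \<not> negint c2 then c2 - of_int k
      else if \<not> negint c1 \<and> negint c2 then 1
      else if negint c1 \<and> \<not> negint c2 then (c1 + of_int k + 1) * (c2 - of_int k)
      else c1 + of_int k + 1)"

definition fN :: "complex \<Rightarrow> complex \<Rightarrow> int \<Rightarrow> complex" where
  "fN c1 c2 k =
     (if \<not> negint c1 \<and> \<not> negint c2 then c1 + of_int k
      else if \<not> negint c1 \<and> negint c2 then (c1 + of_int k) * (c2 - of_int k + 1)
      else if negint c1 \<and> \<not> negint c2 then 1
      else c2 - of_int k + 1)"

text \<open>Elements of N(c1,c2): finitely supported coefficient functions on K(c1,c2)
  (v k is the coefficient of x(k)).\<close>
definition Nmod :: "complex \<Rightarrow> complex \<Rightarrow> (int \<Rightarrow> complex) set" where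
  "Nmod c1 c2 = {v. finite {k. v k \<noteq> 0} \<and> (\<forall>k. v k \<noteq> 0 \<longrightarrow> k \<in> Kset c1 c2)}"

text \<open>Action on N(c1,c2); x(j) := 0 for j outside K(c1,c2).\<close>
definition actN :: "sl2 \<Rightarrow> complex \<Rightarrow> complex \<Rightarrow> (int \<Rightarrow> complex) \<Rightarrow> (int \<Rightarrow> complex)" where
  "actN X c1 c2 v j =
     (if j \<in> Kset c1 c2 then
        (case X of
           H \<Rightarrow> hN c1 c2 j * v j
         | E \<Rightarrow> eN c1 c2 (j - 1) * v (j - 1)
         | F \<Rightarrow> fN c1 c2 (j + 1) * v (j + 1))
      else 0)"

text \<open>Formal sums \<Sum> u(k,l) z(k,l), z(k,l) = x(k) \<otimes> y(l), x(k) \<in> N(a1,a2), y(l) = x(-l) \<in> N(a,0).\<close>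
definition FS :: "complex \<Rightarrow> complex \<Rightarrow> (int \<times> nat \<Rightarrow> complex) set" where
  "FS a1 a2 = {u. \<forall>k l. k \<notin> Kset a1 a2 \<longrightarrow> u (k, l) = 0}"

text \<open>Termwise action X(v \<otimes> w) = Xv \<otimes> w + v \<otimes> Xw on formal sums.\<close>
definition actV :: "sl2 \<Rightarrow> complex \<Rightarrow> complex \<Rightarrow> real \<Rightarrow> (int \<times> nat \<Rightarrow> complex) \<Rightarrow> (int \<times> nat \<Rightarrow> complex)" where
  "actV X a1 a2 a u = (\<lambda>(k, l).
     (if k \<in> Kset a1 a2 then
        (case X of
           H \<Rightarrow> (hN a1 a2 k + hN (of_real a) 0 (- int l)) * u (k, l)
         | E \<Rightarrow> eN a1 a2 (k - 1) * u (k - 1, l)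
                + eN (of_real a) 0 (- int (l + 1)) * u (k, l + 1)
         | F \<Rightarrow> fN a1 a2 (k + 1) * u (k + 1, l)
                + (if l > 0 then fN (of_real a) 0 (- int (l - 1)) * u (k, l - 1) else 0))
      else 0))"

definition normsq_x :: "complex \<Rightarrow> complex \<Rightarrow> int \<Rightarrow> real" where
  "normsq_x a1 a2 k = Re
     (if k = 0 then 1
      else if k > 0 then
        (if \<not> negint a2 then (\<Prod>j=1..nat k. (of_nat j + a1) / (of_nat j - 1 - cnj a2))
         else fact (nat k) * (\<Prod>j=1..nat k. (of_nat j - 1 - a2)))
      else (\<Prod>j=1..nat (- k). (of_nat j + cnj a2) / (of_nat j - 1 - a1)))"

definition normsq_y :: "real \<Rightarrow> nat \<Rightarrow> real" where
  "normsq_y a l =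
     (if a \<notin> \<int> then fact l / (\<Prod>j=1..l. (real j - 1 - a))
      else fact l * (\<Prod>j=1..l. (real j - 1 - a)))"

definition Vspace :: "complex \<Rightarrow> complex \<Rightarrow> real \<Rightarrow> (int \<times> nat \<Rightarrow> complex) set" where
  "Vspace a1 a2 a = {u \<in> FS a1 a2.
     (\<lambda>(k, l). (cmod (u (k, l)))\<^sup>2 * normsq_x a1 a2 k * normsq_y a l) summable_on UNIV}"

definition hilbert_submodule :: "complex \<Rightarrow> complex \<Rightarrow> complex \<Rightarrow> complex \<Rightarrow> real \<Rightarrow> bool" where
  "hilbert_submodule c1 c2 a1 a2 a \<longleftrightarrow>
     (\<exists>\<phi>. (\<forall>v \<in> Nmod c1 c2. \<phi> v \<in> Vspace a1 a2 a)
        \<and> (\<forall>v \<in> Nmod c1 c2. \<forall>w \<in> Nmod c1 c2. \<phi> (\<lambda>k. v k + w k) = (\<lambda>p. \<phi> v p + \<phi> w p))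
        \<and> (\<forall>v \<in> Nmod c1 c2. \<forall>s. \<phi> (\<lambda>k. s * v k) = (\<lambda>p. s * \<phi> v p))
        \<and> (\<forall>X. \<forall>v \<in> Nmod c1 c2. \<phi> (actN X c1 c2 v) = actV X a1 a2 a (\<phi> v))
        \<and> inj_on \<phi> (Nmod c1 c2))"

end

theory Submission imports Defs "HOL-Analysis.Analysis" begin

lemma poch_asymp:
  fixes z :: real assumes z: "z > 0"
  shows "(\<lambda>n. pochhammer z n / (fact (n-1) * real n powr z)) \<longlonglongrightarrow> 1 / Gamma z"
proof -
  have g: "Gamma z \<noteq> 0" using Gamma_real_pos[OF z] by simp
  have "(\<lambda>n. inverse (Gamma_series' z n)) \<longlonglongrightarrow> inverse (Gamma z)"
    by (intro tendsto_inverse Gamma_series'_LIMSEQ g)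
  moreover have "eventually (\<lambda>n. inverse (Gamma_series' z n) = pochhammer z n / (fact (n-1) * real n powr z)) sequentially"
    using eventually_gt_at_top[of "0::nat"]
  proof eventually_elim
    case (elim n)
    then show ?case by (simp add: Gamma_series'_def powr_def field_simps)
  qed
  ultimately show ?thesis
    by (simp add: tendsto_cong divide_inverse)
qed


definition RR :: "real \<Rightarrow> nat \<Rightarrow> real" where
  "RR z n = pochhammer z n / (fact (n-1) * real n powr z)"

lemma RR_lim: "z > 0 \<Longrightarrow> RR z \<longlonglongrightarrow> 1 / Gamma z"
  unfolding RR_def by (rule poch_asymp)

lemma fact_pred: "n \<ge> 1 \<Longrightarrow> (fact n :: real) = real n * fact (n - 1)"
  by (metis Suc_diff_1 fact_Suc less_eq_Suc_le of_nat_Suc One_nat_def)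

lemma poch_fact_powr:
  assumes "n \<ge> 1" "z > 0"
  shows "pochhammer z n / fact n = RR z n * real n powr (z - 1)"
  using assms by (simp add: RR_def fact_pred powr_diff field_simps)

lemma fact_poch_powr:
  assumes "n \<ge> 1" "z > 0"
  shows "fact n / pochhammer z n = real n powr (1 - z) / RR z n"
proof -
  have "pochhammer z n > 0" using assms by (simp add: pochhammer_pos)
  then show ?thesis
  using assms by (simp add: RR_def fact_pred powr_diff field_simps)
qed

lemma T_asymp:
  fixes s \<rho> \<alpha> :: real and m :: nat
  assumes s: "s > 0" and rho: "\<rho> > 0" and al: "\<alpha> > 0"
  defines "T \<equiv> \<lambda>p. (pochhammer s p / fact p)^2 * (fact p / pochhammer \<rho> p) * (fact (m+p) / pochhammer \<alpha> (m+p))"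
  shows "(\<lambda>p. T p / real p powr (2 * s - 2 + 1 - \<rho> + 1 - \<alpha>)) \<longlonglongrightarrow> (1/Gamma s)^2 / ((1/Gamma \<rho>) * (1/Gamma \<alpha>))"
proof -
  have lim1: "(\<lambda>p. RR s p ^ 2 / (RR \<rho> p * RR \<alpha> (m+p)) * ((real (m+p)) / real p) powr (1 - \<alpha>))
      \<longlonglongrightarrow> (1/Gamma s)^2 / ((1/Gamma \<rho>) * (1/Gamma \<alpha>)) * 1 powr (1 - \<alpha>)"
  proof (intro tendsto_intros RR_lim s rho al)
    show "(\<lambda>p. RR \<alpha> (m + p)) \<longlonglongrightarrow> 1 / Gamma \<alpha>"
      using LIMSEQ_ignore_initial_segment[OF RR_lim[OF al], of m] by (simp add: add.commute)
    show "1 / Gamma \<rho> * (1 / Gamma \<alpha>) \<noteq> 0" using Gamma_real_pos[OF rho] Gamma_real_pos[OF al] by simp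
    show "(\<lambda>p. real (m + p) / real p) \<longlonglongrightarrow> 1"
    proof -
      have "(\<lambda>p. 1 + real m / real p) \<longlonglongrightarrow> 1 + 0"
        by (intro tendsto_intros tendsto_divide_0[OF tendsto_const] filterlim_real_sequentially)
      moreover have "eventually (\<lambda>p. 1 + real m / real p = real (m + p) / real p) sequentially"
        using eventually_gt_at_top[of "0::nat"] by eventually_elim (simp add: field_simps)
      ultimately show ?thesis by (simp add: tendsto_cong)
    qed
    show "(1::real) \<noteq> 0 \<or> 0 < 1 - \<alpha> \<and> (\<forall>\<^sub>F x in sequentially. 0 \<le> real (m + x) / real x)" by simp
  qed
  have "eventually (\<lambda>p. RR s p ^ 2 / (RR \<rho> p * RR \<alpha> (m+p)) * ((real (m+p)) / real p) powr (1 - \<alpha>)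
        = T p / real p powr (2 * s - 2 + 1 - \<rho> + 1 - \<alpha>)) sequentially"
    using eventually_gt_at_top[of "0::nat"]
  proof eventually_elim
    case (elim p)
    have p1: "p \<ge> 1" "m + p \<ge> 1" using elim by auto
    have "T p = (RR s p * real p powr (s - 1))^2 * (real p powr (1 - \<rho>) / RR \<rho> p)
              * (real (m+p) powr (1 - \<alpha>) / RR \<alpha> (m+p))"
      unfolding T_def poch_fact_powr[OF p1(1) s] fact_poch_powr[OF p1(1) rho] fact_poch_powr[OF p1(2) al] ..
    also have "\<dots> = RR s p ^ 2 / (RR \<rho> p * RR \<alpha> (m+p)) * ((real (m+p)) / real p) powr (1 - \<alpha>)
          * real p powr (2 * s - 2 + 1 - \<rho> + 1 - \<alpha>)"
    proof -
      have pp: "real p powr (2 * s - 2 + 1 - \<rho> + 1 - \<alpha>) = real p powr (s - 1) * real p powr (s - 1) * real p powr (1 - \<rho>) * real p powr (1 - \<alpha>)"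
        by (simp add: powr_add[symmetric] algebra_simps)
      have q: "((real (m+p)) / real p) powr (1 - \<alpha>) = real (m+p) powr (1 - \<alpha>) / real p powr (1 - \<alpha>)"
        using elim by (simp add: powr_divide)
      have "real p powr (1 - \<alpha>) > 0" using elim by simp
      then show ?thesis unfolding pp q by (simp add: power2_eq_square)
    qed
    finally show ?case using elim by simp
  qed
  then show ?thesis using lim1 by (simp add: tendsto_cong)
qed


lemma limit_compare_powr:
  fixes f :: "nat \<Rightarrow> real"
  assumes nn: "\<And>n. f n \<ge> 0" and lim: "(\<lambda>n. f n / real n powr A) \<longlonglongrightarrow> C" and C: "C > 0"
  shows "summable f \<longleftrightarrow> A < -1"
proof -
  have ev: "eventually (\<lambda>n. f n / real n powr A > C/2 \<and> f n / real n powr A < 2*C) sequentially"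
    using lim C by (intro eventually_conj order_tendstoD) auto
  then obtain N where N: "\<And>n. n \<ge> N \<Longrightarrow> f n / real n powr A > C/2 \<and> f n / real n powr A < 2*C"
    by (auto simp: eventually_sequentially)
  have bnd: "C/2 * real n powr A \<le> f n \<and> f n \<le> 2*C * real n powr A" if "n \<ge> Suc N" for n
  proof -
    have "n > 0" "n \<ge> N" using that by auto
    then have p: "real n powr A > 0" by simp
    show ?thesis using N[OF \<open>n \<ge> N\<close>] p by (simp add: field_simps)
  qed
  show ?thesis
  proof
    assume "summable f"
    then have "summable (\<lambda>n. C/2 * real n powr A)"
      by (rule summable_comparison_test'[where N="Suc N"]) (use bnd C in auto)
    then have "summable (\<lambda>n. real n powr A)" using C summable_cmult_iff[of "C/2"] by simp
    then show "A < -1" by (simp add: summable_real_powr_iff)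
  next
    assume "A < -1"
    then have "summable (\<lambda>n. 2*C * real n powr A)" by (simp add: summable_real_powr_iff)
    then show "summable f"
      by (rule summable_comparison_test'[where N="Suc N"]) (use bnd nn in auto)
  qed
qed

lemma T_summable_iff:
  fixes s \<rho> \<alpha> :: real and m :: nat
  assumes s: "s > 0" and rho: "\<rho> > 0" and al: "\<alpha> > 0"
  shows "summable (\<lambda>p. (pochhammer s p / fact p)^2 * (fact p / pochhammer \<rho> p) * (fact (m+p) / pochhammer \<alpha> (m+p)))
     \<longleftrightarrow> 2 * s - \<rho> - \<alpha> < -1"
proof -
  have "summable (\<lambda>p. (pochhammer s p / fact p)^2 * (fact p / pochhammer \<rho> p) * (fact (m+p) / pochhammer \<alpha> (m+p)))
     \<longleftrightarrow> (2 * s - 2 + 1 - \<rho> + 1 - \<alpha>) < -1"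
  proof (rule limit_compare_powr[OF _ T_asymp[OF s rho al]])
    show "\<And>n. 0 \<le> (pochhammer s n / fact n)\<^sup>2 * (fact n / pochhammer \<rho> n) * (fact (m + n) / pochhammer \<alpha> (m + n))"
      using rho al by (intro mult_nonneg_nonneg divide_nonneg_pos pochhammer_pos) auto
    show "0 < (1 / Gamma s)\<^sup>2 / (1 / Gamma \<rho> * (1 / Gamma \<alpha>))"
      using Gamma_real_pos[OF s] Gamma_real_pos[OF rho] Gamma_real_pos[OF al] by simp
  qed
  then show ?thesis by simp
qed


definition opE :: "real \<Rightarrow> (int \<times> nat \<Rightarrow> complex) \<Rightarrow> (int \<times> nat \<Rightarrow> complex)" where
  "opE r u = (\<lambda>(p,q). (of_real r - of_int p + 1) * u (p-1, q) + of_nat (Suc q) * u (p, Suc q))"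

definition opF :: "real \<Rightarrow> (int \<times> nat \<Rightarrow> complex) \<Rightarrow> (int \<times> nat \<Rightarrow> complex)" where
  "opF a u = (\<lambda>(p,q). of_int (p+1) * u (p+1, q) + (if q > 0 then (of_real a - of_nat q + 1) * u (p, q-1) else 0))"

definition opH :: "real \<Rightarrow> real \<Rightarrow> (int \<times> nat \<Rightarrow> complex) \<Rightarrow> (int \<times> nat \<Rightarrow> complex)" where
  "opH r a u = (\<lambda>(p,q). (- of_real r + 2 * of_int p + of_real a - 2 * of_nat q) * u (p,q))"

lemma comm_EF: "opE r (opF a u) x - opF a (opE r u) x = opH r a u x"
proof (cases x)
  case (Pair p q)
  show ?thesis
  proof (cases q)
    case 0
    then show ?thesis using Pair by (simp add: opE_def opF_def opH_def algebra_simps)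
  next
    case (Suc q')
    then show ?thesis using Pair by (simp add: opE_def opF_def opH_def algebra_simps)
  qed
qed

lemma comm_HE: "opH r a (opE r u) x - opE r (opH r a u) x = 2 * opE r u x"
  by (cases x) (simp add: opE_def opH_def algebra_simps)

lemma opE_scale: "opE r (\<lambda>x. c * u x) = (\<lambda>x. c * opE r u x)"
  by (auto simp: opE_def algebra_simps)
lemma opF_scale: "opF a (\<lambda>x. c * u x) = (\<lambda>x. c * opF a u x)"
  by (auto simp: opF_def algebra_simps)
lemma opH_scale: "opH r a (\<lambda>x. c * u x) = (\<lambda>x. c * opH r a u x)"
  by (auto simp: opH_def algebra_simps)


definition bb :: "real \<Rightarrow> int \<Rightarrow> real" where
  "bb s j = (if j < 0 then 0 else pochhammer s (nat j) / fact (nat j))"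

lemma bb_rec: "of_int j * bb s j = (of_int j - 1 + s) * bb s (j - 1)"
proof (cases "j \<ge> 1")
  case True
  define n where "n = nat (j - 1)"
  have n: "nat j = Suc n" "j = int n + 1" using True by (simp_all add: n_def)
  have "nat (j - 1) = n" using n by simp
  then have b1: "bb s (j-1) = pochhammer s n / fact n" using n by (simp add: bb_def)
  have b2: "bb s j = pochhammer s n * (s + real n) / ((real n + 1) * fact n)"
    using n by (simp add: bb_def pochhammer_Suc algebra_simps)
  have j: "of_int j = real n + 1" using n by simp
  have nz: "real n + 1 \<noteq> 0" by simp
  have "(real n + 1) * (pochhammer s n * (s + real n) / ((real n + 1) * fact n))
        = pochhammer s n * (s + real n) / fact n"
    unfolding times_divide_eq_right nonzero_mult_divide_mult_cancel_left[OF nz] ..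
  then show ?thesis unfolding b1 b2 j by (simp add: algebra_simps)
next
  case False
  then show ?thesis by (cases "j = 0") (auto simp: bb_def)
qed

lemma bb_nonneg: "s > 0 \<Longrightarrow> bb s j \<ge> 0"
  by (simp add: bb_def pochhammer_nonneg)

lemma bb_pos: "s > 0 \<Longrightarrow> j \<ge> 0 \<Longrightarrow> bb s j > 0"
  by (simp add: bb_def pochhammer_pos)

definition w0 :: "nat \<Rightarrow> real \<Rightarrow> int \<times> nat \<Rightarrow> complex" where
  "w0 m s = (\<lambda>(p,q). if int q = p + int m then of_real (bb s p) else 0)"

lemma opF_w0:
  assumes "s = real m - a"
  shows "opF a (w0 m s) x = 0"
proof (cases x)
  case (Pair p q)
  have rec: "of_int (p+1) * bb s (p+1) = (of_int p + s) * bb s p"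
    using bb_rec[of "p+1" s] by simp
  have rec': "of_int (p+1) * complex_of_real (bb s (p+1)) = (of_int p + of_real s) * complex_of_real (bb s p)"
    using arg_cong[OF rec, of complex_of_real] by simp
  show ?thesis
  proof (cases "int q = p + 1 + int m")
    case True
    show ?thesis
    proof (cases q)
      case 0
      then have "p < 0" using True by simp
      then have "bb s p = 0" by (simp add: bb_def)
      then show ?thesis using Pair True 0 rec' by (simp add: opF_def w0_def)
    next
      case (Suc q')
      then have qq: "int q' = p + int m" using True by simp
      then have qc: "(of_nat q' :: complex) = of_int p + of_nat m"
        by (metis of_int_add of_int_of_nat_eq)
      have ac: "complex_of_real a = of_nat m - of_real s" using assms by simp
      have "opF a (w0 m s) x = of_int (p+1) * complex_of_real (bb s (p+1)) + (of_real a - of_nat (Suc q') + 1) * of_real (bb s p)"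
        using Pair True Suc qq by (simp add: opF_def w0_def)
      also have "\<dots> = (of_int p + of_real s) * complex_of_real (bb s p) + (of_real a - of_nat q') * of_real (bb s p)"
        using rec' by simp
      also have "\<dots> = 0" unfolding qc ac by (simp add: algebra_simps)
      finally show ?thesis .
    qed
  next
    case False
    then show ?thesis using Pair by (auto simp: opF_def w0_def)
  qed
qed

lemma opH_w0:
  "opH r a (w0 m s) x = complex_of_real (a - r - 2 * real m) * w0 m s x"
proof (cases x)
  case (Pair p q)
  show ?thesis
  proof (cases "int q = p + int m")
    case True
    then have qc: "(of_nat q :: complex) = of_int p + of_nat m"
      by (metis of_int_add of_int_of_nat_eq)
    show ?thesis using Pair True by (simp add: opH_def w0_def qc algebra_simps)
  qed (use Pair in \<open>simp add: opH_def w0_def\<close>)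
qed

definition VV :: "real \<Rightarrow> nat \<Rightarrow> real \<Rightarrow> nat \<Rightarrow> int \<times> nat \<Rightarrow> complex" where
  "VV r m s k = (opE r ^^ k) (w0 m s)"

lemma opE_zero: "opE r (\<lambda>_. 0) = (\<lambda>_. 0)"
  by (auto simp: opE_def)

lemma VV_Suc: "VV r m s (Suc k) = opE r (VV r m s k)"
  by (simp add: VV_def)

lemma VV_H:
  "opH r a (VV r m s k) = (\<lambda>x. (complex_of_real (a - r - 2 * real m) + 2 * of_nat k) * VV r m s k x)"
proof (induction k)
  case 0
  then show ?case by (auto simp: VV_def opH_w0)
next
  case (Suc k)
  show ?case
  proof
    fix x
    have "opH r a (VV r m s (Suc k)) x = opE r (opH r a (VV r m s k)) x + 2 * opE r (VV r m s k) x"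
      using comm_HE[of r a "VV r m s k" x] by (simp add: VV_Suc algebra_simps)
    also have "\<dots> = (complex_of_real (a - r - 2 * real m) + 2 * of_nat (Suc k)) * VV r m s (Suc k) x"
      unfolding Suc opE_scale by (simp add: VV_Suc algebra_simps)
    finally show "opH r a (VV r m s (Suc k)) x = (complex_of_real (a - r - 2 * real m) + 2 * of_nat (Suc k)) * VV r m s (Suc k) x" .
  qed
qed

lemma VV_F0: "s = real m - a \<Longrightarrow> opF a (VV r m s 0) = (\<lambda>_. 0)"
  using opF_w0 by (auto simp: VV_def)

lemma VV_F:
  fixes r a s :: real and m k :: nat
  assumes "s = real m - a"
  defines "lam \<equiv> complex_of_real (a - r - 2 * real m)"
  shows "opF a (VV r m s (Suc k)) = (\<lambda>x. - (of_nat (Suc k) * (lam + of_nat k)) * VV r m s k x)"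
proof (induction k)
  case 0
  show ?case
  proof
    fix x
    have "opF a (VV r m s (Suc 0)) x = opE r (opF a (VV r m s 0)) x - opH r a (VV r m s 0) x"
      using comm_EF[of r a "VV r m s 0" x] by (simp add: VV_Suc algebra_simps)
    then show "opF a (VV r m s (Suc 0)) x = - (of_nat (Suc 0) * (lam + of_nat 0)) * VV r m s 0 x"
      using VV_F0[OF assms(1)] VV_H[of r a m s 0] by (simp add: opE_zero lam_def algebra_simps)
  qed
next
  case (Suc k)
  show ?case
  proof
    fix x
    have "opF a (VV r m s (Suc (Suc k))) x = opE r (opF a (VV r m s (Suc k))) x - opH r a (VV r m s (Suc k)) x"
      using comm_EF[of r a "VV r m s (Suc k)" x] by (simp add: VV_Suc algebra_simps)
    also have "\<dots> = - (of_nat (Suc k) * (lam + of_nat k)) * VV r m s (Suc k) x - (lam + 2 * of_nat (Suc k)) * VV r m s (Suc k) x"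
      unfolding Suc opE_scale VV_H lam_def by (simp only: VV_Suc)
    also have "\<dots> = - (of_nat (Suc (Suc k)) * (lam + of_nat (Suc k))) * VV r m s (Suc k) x"
      by (simp add: algebra_simps)
    finally show "opF a (VV r m s (Suc (Suc k))) x = - (of_nat (Suc (Suc k)) * (lam + of_nat (Suc k))) * VV r m s (Suc k) x" .
  qed
qed

lemma VV_neg: "p < 0 \<Longrightarrow> VV r m s k (p, q) = 0"
proof (induction k arbitrary: p q)
  case 0
  then show ?case by (simp add: VV_def w0_def bb_def)
next
  case (Suc k)
  then show ?case by (simp add: VV_Suc opE_def)
qed


lemma step_identity:
  assumes "int q + 1 = p + int m - int k"
  shows "(r - of_int p + 1) * bb s (p - 1 - int i) + real (Suc q) * bb s (p - int i)
       = (real m - real k + real i) * bb s (p - int i) + (r + s - real i) * bb s (p - int i - 1)"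
proof -
  have rec: "of_int (p - int i) * bb s (p - int i) = (of_int (p - int i) - 1 + s) * bb s (p - int i - 1)"
    by (rule bb_rec)
  have q: "real (Suc q) = real m - real k + real i + of_int (p - int i)"
    using assms by (simp add: of_nat_Suc)
  have e: "p - 1 - int i = p - int i - 1" by simp
  show ?thesis unfolding q e using rec by (simp add: algebra_simps)
qed

lemma VV_rep:
  assumes s: "s = real m - a"
  shows "\<exists>\<rho>::nat \<Rightarrow> complex. \<forall>p q. VV r m s k (p,q) =
     (if int q = p + int m - int k then (\<Sum>i\<le>k. \<rho> i * of_real (bb s (p - int i))) else 0)"
proof (induction k)
  case 0
  show ?case by (rule exI[of _ "\<lambda>_. 1"]) (simp add: VV_def w0_def)
next
  case (Suc k)
  then obtain \<rho> where \<rho>: "\<And>p q. VV r m s k (p,q) =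
     (if int q = p + int m - int k then (\<Sum>i\<le>k. \<rho> i * of_real (bb s (p - int i))) else 0)" by blast
  define \<rho>' where "\<rho>' = (\<lambda>i. (if i \<le> k then \<rho> i * of_real (real m - real k + real i) else 0)
        + (if i = 0 then 0 else \<rho> (i - 1) * of_real (r + s - real (i - 1))))"
  show ?case
  proof (rule exI[of _ \<rho>'], intro allI)
    fix p q
    show "VV r m s (Suc k) (p,q) = (if int q = p + int m - int (Suc k) then (\<Sum>i\<le>Suc k. \<rho>' i * of_real (bb s (p - int i))) else 0)"
    proof (cases "int q = p + int m - int (Suc k)")
      case True
      have l1: "int q = (p - 1) + int m - int k" using True by simp
      have l2: "int (Suc q) = p + int m - int k" using True by simp
      have "VV r m s (Suc k) (p,q) = (of_real r - of_int p + 1) * VV r m s k (p-1,q) + of_nat (Suc q) * VV r m s k (p, Suc q)"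
        by (simp add: VV_Suc opE_def)
      also have "\<dots> = (\<Sum>i\<le>k. \<rho> i * of_real ((r - of_int p + 1) * bb s (p - 1 - int i) + real (Suc q) * bb s (p - int i)))"
        unfolding \<rho> using l1 l2 by (simp add: sum_distrib_left sum.distrib[symmetric] algebra_simps)
      also have "\<dots> = (\<Sum>i\<le>k. \<rho> i * of_real ((real m - real k + real i) * bb s (p - int i) + (r + s - real i) * bb s (p - int i - 1)))"
        using step_identity[of q p m k r s] True by simp
      also have "\<dots> = (\<Sum>i\<le>k. \<rho> i * of_real (real m - real k + real i) * of_real (bb s (p - int i)))
                   + (\<Sum>i\<le>k. \<rho> i * of_real (r + s - real i) * of_real (bb s (p - int (Suc i))))"
        by (simp add: sum.distrib[symmetric] algebra_simps)
      also have "\<dots> = (\<Sum>i\<le>Suc k. \<rho>' i * of_real (bb s (p - int i)))"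
      proof -
        have A: "(\<Sum>i\<le>Suc k. (if i \<le> k then \<rho> i * of_real (real m - real k + real i) else 0) * complex_of_real (bb s (p - int i)))
            = (\<Sum>i\<le>k. \<rho> i * of_real (real m - real k + real i) * of_real (bb s (p - int i)))"
          by (simp add: sum.atMost_Suc)
        have B: "(\<Sum>i\<le>Suc k. (if i = 0 then 0 else \<rho> (i - 1) * of_real (r + s - real (i - 1))) * complex_of_real (bb s (p - int i)))
            = (\<Sum>i\<le>k. \<rho> i * of_real (r + s - real i) * of_real (bb s (p - int (Suc i))))"
          by (subst sum.atMost_Suc_shift) simp
        show ?thesis unfolding \<rho>'_def distrib_right sum.distrib A B ..
      qed
      finally show ?thesis using True by simp
    next
      case False
      have l1: "int q \<noteq> (p - 1) + int m - int k" using False by simp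
      have l2: "int (Suc q) \<noteq> p + int m - int k" using False by simp
      show ?thesis using False l1 l2 by (simp add: VV_Suc opE_def \<rho>)
    qed
  qed
qed


definition nxg :: "real \<Rightarrow> nat \<Rightarrow> real" where
  "nxg r n = fact n / pochhammer (-r) n"
definition nyg :: "real \<Rightarrow> nat \<Rightarrow> real" where
  "nyg a n = fact n / pochhammer (-a) n"
definition gterm :: "real \<Rightarrow> real \<Rightarrow> (int \<times> nat \<Rightarrow> complex) \<Rightarrow> int \<times> nat \<Rightarrow> real" where
  "gterm r a u = (\<lambda>(p,q). if p \<ge> 0 then (cmod (u (p,q)))^2 * nxg r (nat p) * nyg a q else 0)"

lemma nxg_pos: "r < 0 \<Longrightarrow> nxg r n > 0"
  by (simp add: nxg_def pochhammer_pos)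
lemma nyg_pos: "a < 0 \<Longrightarrow> nyg a n > 0"
  by (simp add: nyg_def pochhammer_pos)

lemma bb_shift1:
  assumes s: "s > 0"
  shows "bb s (j - 1) \<le> max 1 (1/s) * bb s j"
proof (cases "j \<ge> 1")
  case False
  then show ?thesis using bb_nonneg[OF s, of j] by (simp add: bb_def)
next
  case True
  define K where "K = max 1 (1/s)"
  have pos: "of_int j - 1 + s > 0" using True s by simp
  have jK: "of_int j \<le> K * (of_int j - 1 + s)"
  proof (cases "s \<ge> 1")
    case True
    then have "K = 1" using s by (simp add: K_def)
    then show ?thesis using True by simp
  next
    case False
    then have K: "K = 1/s" using s by (simp add: K_def)
    have "of_int j - 1 \<le> (of_int j - 1) / s"
      using False s True by (simp add: divide_simps mult_left_le)
    then show ?thesis unfolding K using s by (simp add: field_simps)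
  qed
  have "(of_int j - 1 + s) * bb s (j - 1) = of_int j * bb s j" using bb_rec[of j s] by simp
  also have "\<dots> \<le> K * (of_int j - 1 + s) * bb s j"
    using jK bb_nonneg[OF s, of j] by (intro mult_right_mono) auto
  finally have "(of_int j - 1 + s) * bb s (j - 1) \<le> (of_int j - 1 + s) * (K * bb s j)" by (simp add: algebra_simps)
  then show ?thesis using pos unfolding K_def by simp
qed

lemma bb_shift:
  assumes s: "s > 0"
  shows "bb s (j - int i) \<le> max 1 (1/s) ^ i * bb s j"
proof (induction i)
  case 0 then show ?case by simp
next
  case (Suc i)
  have "bb s (j - int (Suc i)) = bb s ((j - int i) - 1)" by (simp add: algebra_simps)
  also have "\<dots> \<le> max 1 (1/s) * bb s (j - int i)" by (rule bb_shift1[OF s])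
  also have "\<dots> \<le> max 1 (1/s) * (max 1 (1/s) ^ i * bb s j)"
    using Suc by (intro mult_left_mono) auto
  finally show ?case by (simp add: algebra_simps)
qed

lemma VV_bound:
  assumes s: "s = real m - a" and a: "a < 0"
  shows "\<exists>C. \<forall>p q. cmod (VV r m s k (p,q)) \<le> C * bb s p"
proof -
  have s0: "s > 0" using s a by simp
  obtain \<rho> where \<rho>: "\<And>p q. VV r m s k (p,q) =
     (if int q = p + int m - int k then (\<Sum>i\<le>k. \<rho> i * of_real (bb s (p - int i))) else 0)"
    using VV_rep[OF s] by blast
  define C where "C = (\<Sum>i\<le>k. cmod (\<rho> i) * max 1 (1/s) ^ i)"
  have C0: "C \<ge> 0" unfolding C_def by (intro sum_nonneg) auto
  show ?thesis
  proof (intro exI allI)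
    fix p q
    show "cmod (VV r m s k (p,q)) \<le> C * bb s p"
    proof (cases "int q = p + int m - int k")
      case True
      have "cmod (VV r m s k (p,q)) \<le> (\<Sum>i\<le>k. cmod (\<rho> i * of_real (bb s (p - int i))))"
        unfolding \<rho> using True by (simp add: norm_sum)
      also have "\<dots> = (\<Sum>i\<le>k. cmod (\<rho> i) * bb s (p - int i))"
        using bb_nonneg[OF s0] by (simp add: norm_mult)
      also have "\<dots> \<le> (\<Sum>i\<le>k. cmod (\<rho> i) * (max 1 (1/s) ^ i * bb s p))"
        by (intro sum_mono mult_left_mono bb_shift[OF s0]) auto
      also have "\<dots> = C * bb s p" unfolding C_def by (simp add: sum_distrib_right sum_distrib_left algebra_simps)
      finally show ?thesis .
    next
      case False
      then show ?thesis using C0 bb_nonneg[OF s0, of p] by (simp add: \<rho>)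
    qed
  qed
qed

lemma nyg_shift1:
  assumes a: "a < 0"
  shows "nyg a l \<le> max 1 (-a) * nyg a (Suc l)"
proof -
  have pp: "pochhammer (-a) l > 0" using a by (simp add: pochhammer_pos)
  have la: "real l - a > 0" using a by simp
  have eq: "nyg a (Suc l) = nyg a l * (real l + 1) / (real l - a)"
    unfolding nyg_def using pp la by (simp add: pochhammer_Suc field_simps)
  have le: "real l - a \<le> max 1 (-a) * (real l + 1)"
  proof (cases "-a \<le> 1")
    case True then show ?thesis by simp
  next
    case False
    then have "max 1 (-a) = -a" by simp
    moreover have "real l * (1 + a) \<le> 0" using False by (intro mult_nonneg_nonpos) auto
    ultimately show ?thesis by (simp add: algebra_simps)
  qed
  have "nyg a l * (real l - a) \<le> nyg a l * (max 1 (-a) * (real l + 1))"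
    using le nyg_pos[OF a, of l] by (intro mult_left_mono) auto
  then have "nyg a l \<le> nyg a l * (max 1 (-a) * (real l + 1)) / (real l - a)"
    using la by (simp add: field_simps)
  then show ?thesis unfolding eq by (simp add: algebra_simps)
qed

lemma nyg_shift:
  assumes a: "a < 0"
  shows "nyg a l \<le> max 1 (-a) ^ d * nyg a (l + d)"
proof (induction d)
  case 0 then show ?case by simp
next
  case (Suc d)
  have "nyg a l \<le> max 1 (-a) ^ d * nyg a (l + d)" by (rule Suc)
  also have "\<dots> \<le> max 1 (-a) ^ d * (max 1 (-a) * nyg a (Suc (l + d)))"
    by (intro mult_left_mono nyg_shift1[OF a]) auto
  finally show ?case by (simp add: algebra_simps)
qed

lemma line_summable:
  fixes g :: "nat \<Rightarrow> real"
  assumes nn: "\<And>n. g n \<ge> 0" and sg: "summable g"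
  shows "(\<lambda>(p,q). if p \<ge> 0 \<and> int q = p + d then g (nat p) else 0) summable_on (UNIV :: (int \<times> nat) set)"
proof -
  define \<iota> where "\<iota> = (\<lambda>n::nat. (int n, nat (int n + d)))"
  define A where "A = {n::nat. int n + d \<ge> 0}"
  define D where "D = (\<lambda>(p,q). if p \<ge> 0 \<and> int q = p + d then g (nat p) else (0::real))"
  have inj: "inj_on \<iota> A" by (auto simp: \<iota>_def inj_on_def)
  have g1: "g summable_on UNIV" using summable_on_UNIV_nonneg_real_iff[of g] nn sg by simp
  have "(D \<circ> \<iota>) summable_on A"
  proof -
    have "g summable_on A" by (rule summable_on_subset_banach[OF g1]) auto
    moreover have "\<And>n. n \<in> A \<Longrightarrow> (D \<circ> \<iota>) n = g n" by (auto simp: D_def \<iota>_def A_def)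
    ultimately show ?thesis using summable_on_cong by metis
  qed
  then have "D summable_on (\<iota> ` A)" by (simp add: summable_on_reindex[OF inj])
  moreover have "\<And>x. x \<in> UNIV - \<iota> ` A \<Longrightarrow> D x = 0"
  proof -
    fix x assume x: "x \<in> UNIV - \<iota> ` A"
    obtain p q where pq: "x = (p,q)" by (cases x)
    show "D x = 0"
    proof (rule ccontr)
      assume "D x \<noteq> 0"
      then have c: "p \<ge> 0" "int q = p + d" using pq by (auto simp: D_def split: if_splits)
      then have "x = \<iota> (nat p)" "nat p \<in> A" using pq by (auto simp: \<iota>_def A_def)
      then show False using x by auto
    qed
  qed
  ultimately have "D summable_on UNIV"
    using summable_on_cong_neutral[of UNIV "\<iota> ` A" D D] by auto
  then show ?thesis unfolding D_def .
qed


lemma T_nonneg: fixes r a s :: real shows "r < 0 \<Longrightarrow> a < 0 \<Longrightarrow> s > 0 \<Longrightarrow>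
  0 \<le> (pochhammer s n / fact n)^2 * (fact n / pochhammer (-r) n) * (fact (m+n) / pochhammer (-a) (m+n))"
proof -
  assume "r < 0" "a < 0" "s > 0"
  have "pochhammer (-r) n > 0" by (rule pochhammer_pos) (use \<open>r < 0\<close> in simp)
  moreover have "pochhammer (-a) (m+n) > 0" by (rule pochhammer_pos) (use \<open>a < 0\<close> in simp)
  ultimately show ?thesis by (intro mult_nonneg_nonneg divide_nonneg_pos) auto
qed

lemma gterm_nonneg: "r < 0 \<Longrightarrow> a < 0 \<Longrightarrow> gterm r a u x \<ge> 0"
  by (cases x) (auto simp: gterm_def intro!: mult_nonneg_nonneg less_imp_le[OF nxg_pos] less_imp_le[OF nyg_pos])

lemma VV_summable:
  assumes s: "s = real m - a" and a: "a < 0" and r: "r < 0" and cond: "2 * s + r + a < -1"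
  shows "gterm r a (VV r m s k) summable_on UNIV"
proof -
  have s0: "s > 0" using s a by simp
  define T where "T = (\<lambda>n. (pochhammer s n / fact n)^2 * (fact n / pochhammer (-r) n) * (fact (m+n) / pochhammer (-a) (m+n)))"
  have sT: "summable T" unfolding T_def using T_summable_iff[of s "-r" "-a" m] s0 a r cond by simp
  have T0: "\<And>n. T n \<ge> 0" unfolding T_def using T_nonneg[OF r a s0] by blast
  obtain C where C: "\<And>p q. cmod (VV r m s k (p,q)) \<le> C * bb s p" using VV_bound[OF s a] by blast
  obtain \<rho> where \<rho>: "\<And>p q. VV r m s k (p,q) =
     (if int q = p + int m - int k then (\<Sum>i\<le>k. \<rho> i * of_real (bb s (p - int i))) else 0)"
    using VV_rep[OF s] by blast
  define K where "K = max 1 (-a) ^ k"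
  define D where "D = (\<lambda>(p,q). if p \<ge> 0 \<and> int q = p + (int m - int k) then T (nat p) else (0::real))"
  have sD: "D summable_on UNIV" unfolding D_def by (rule line_summable[OF T0 sT])
  then have sD': "(\<lambda>x. C^2 * K * D x) summable_on UNIV" by (intro summable_on_cmult_right)
  show ?thesis
  proof (rule summable_on_comparison_test[OF sD'])
    fix x :: "int \<times> nat"
    show "0 \<le> gterm r a (VV r m s k) x" by (rule gterm_nonneg[OF r a])
    obtain p q where x: "x = (p,q)" by (cases x)
    show "gterm r a (VV r m s k) x \<le> C^2 * K * D x"
    proof (cases "p \<ge> 0 \<and> int q = p + (int m - int k)")
      case False
      then have "gterm r a (VV r m s k) x = 0"
        using x by (auto simp: gterm_def \<rho>)
      moreover have "D x = 0" using False x by (auto simp: D_def)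
      ultimately show ?thesis by simp
    next
      case True
      have c1: "(cmod (VV r m s k (p,q)))^2 \<le> (C * bb s p)^2"
        using C[of p q] by (intro power_mono) auto
      have q: "q + k = m + nat p" using True by linarith
      have ny: "nyg a q \<le> K * nyg a (m + nat p)" unfolding K_def q[symmetric] by (rule nyg_shift[OF a])
      have bbp: "bb s p = pochhammer s (nat p) / fact (nat p)" using True by (simp add: bb_def)
      have "gterm r a (VV r m s k) x = (cmod (VV r m s k (p,q)))^2 * nxg r (nat p) * nyg a q"
        using x True by (simp add: gterm_def)
      also have "\<dots> \<le> (C * bb s p)^2 * nxg r (nat p) * (K * nyg a (m + nat p))"
        using nxg_pos[OF r, of "nat p"] nyg_pos[OF a, of q] c1 ny
        by (intro mult_mono) (auto intro: less_imp_le)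
      also have "\<dots> = C^2 * K * ((bb s p)^2 * nxg r (nat p) * nyg a (m + nat p))"
        by (simp add: power_mult_distrib algebra_simps)
      also have "\<dots> = C^2 * K * T (nat p)"
        unfolding T_def bbp nxg_def nyg_def ..
      also have "\<dots> = C^2 * K * D x" using True x by (simp add: D_def)
      finally show ?thesis .
    qed
  qed
qed

lemma line_extract:
  assumes a: "a < 0" and r: "r < 0" and s: "s = real m - a" and c: "c \<noteq> 0"
    and u: "\<And>p q. p \<ge> 0 \<Longrightarrow> u (p,q) = (if int q = p + int m then c * of_real (bb s p) else 0)"
    and su: "gterm r a u summable_on UNIV"
  shows "2 * s + r + a < -1"
proof -
  have s0: "s > 0" using s a by simp
  define T where "T = (\<lambda>n. (pochhammer s n / fact n)^2 * (fact n / pochhammer (-r) n) * (fact (m+n) / pochhammer (-a) (m+n)))"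
  define \<iota> where "\<iota> = (\<lambda>n::nat. (int n, m + n))"
  have inj: "inj_on \<iota> UNIV" by (auto simp: \<iota>_def inj_on_def)
  have "gterm r a u summable_on range \<iota>" by (rule summable_on_subset_banach[OF su]) auto
  then have "(gterm r a u \<circ> \<iota>) summable_on UNIV" by (simp add: summable_on_reindex[OF inj])
  moreover have "(gterm r a u \<circ> \<iota>) = (\<lambda>n. (cmod c)^2 * T n)"
  proof
    fix n
    have "bb s (int n) = pochhammer s n / fact n" by (simp add: bb_def)
    moreover have "cmod (c * complex_of_real (pochhammer s n) / fact n) = cmod c * (pochhammer s n / fact n)"
      using s0 by (simp add: norm_mult norm_divide abs_of_nonneg pochhammer_nonneg)
    ultimately show "(gterm r a u \<circ> \<iota>) n = (cmod c)^2 * T n"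
      using s0 by (simp add: \<iota>_def gterm_def u T_def nxg_def nyg_def power_mult_distrib power_divide)
  qed
  ultimately have "(\<lambda>n. (cmod c)^2 * T n) summable_on UNIV" by simp
  moreover have T0: "\<And>n. T n \<ge> 0" unfolding T_def using T_nonneg[OF r a s0] by blast
  ultimately have "summable (\<lambda>n. (cmod c)^2 * T n)"
    using summable_on_UNIV_nonneg_real_iff[of "\<lambda>n. (cmod c)^2 * T n"] by simp
  then have "summable T" using c summable_cmult_iff[of "(cmod c)^2" T] by simp
  then show ?thesis unfolding T_def using T_summable_iff[of s "-r" "-a" m] s0 a r by simp
qed


lemma negint_real: "negint (complex_of_real x) \<longleftrightarrow> x \<in> \<int> \<and> x < 0"
  by (simp add: negint_def)

lemma negint_zero: "\<not> negint 0"
  by (simp add: negint_def)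

lemma Kset_0r: "r < 0 \<Longrightarrow> Kset 0 (complex_of_real r) = {k. k \<ge> 0}"
  by (auto simp: Kset_def)

definition g1 :: "real \<Rightarrow> nat \<Rightarrow> complex" where
  "g1 r n = (if r \<in> \<int> then (\<Prod>i<n. (complex_of_real r - of_nat i)) else 1)"
definition hh :: "real \<Rightarrow> nat \<Rightarrow> complex" where
  "hh a n = (if a \<in> \<int> then (\<Prod>i<n. (complex_of_real a - of_nat i)) else 1)"
definition conv :: "real \<Rightarrow> real \<Rightarrow> (int \<times> nat \<Rightarrow> complex) \<Rightarrow> int \<times> nat \<Rightarrow> complex" where
  "conv r a u = (\<lambda>(p,q). if p \<ge> 0 then u (p,q) / (g1 r (nat p) * hh a q) else 0)"

lemma prod_neg_nz: "x < 0 \<Longrightarrow> (\<Prod>i<n. (complex_of_real x - of_nat i)) \<noteq> 0"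
proof -
  assume x: "x < 0"
  have "complex_of_real x - of_nat i \<noteq> 0" for i
  proof
    assume "complex_of_real x - of_nat i = 0"
    then have "Re (complex_of_real x - of_nat i) = 0" by simp
    then show False using x by simp
  qed
  then show ?thesis by (simp add: prod_zero_iff)
qed

lemma g1_nz: "r < 0 \<Longrightarrow> g1 r n \<noteq> 0"
  using prod_neg_nz by (simp add: g1_def)
lemma hh_nz: "a < 0 \<Longrightarrow> hh a n \<noteq> 0"
  using prod_neg_nz by (simp add: hh_def)

lemma g1_Suc: "g1 r (Suc n) = g1 r n * (if r \<in> \<int> then complex_of_real r - of_nat n else 1)"
  by (simp add: g1_def)
lemma hh_Suc: "hh a (Suc n) = hh a n * (if a \<in> \<int> then complex_of_real a - of_nat n else 1)"
  by (simp add: hh_def)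

lemma E1:
  assumes r: "r < 0" and p: "p \<ge> 1"
  shows "eN 0 (complex_of_real r) (p - 1) / g1 r (nat (p - 1)) = (complex_of_real r - of_int p + 1) / g1 r (nat p)"
proof -
  have np: "nat p = Suc (nat (p - 1))" using p by simp
  have ip: "of_nat (nat (p - 1)) = (of_int p - 1 :: complex)" using p by (simp add: of_nat_nat)
  have nz: "g1 r (nat (p-1)) \<noteq> 0" by (rule g1_nz[OF r])
  have nz2: "complex_of_real r - of_int p + 1 \<noteq> 0"
  proof
    assume "complex_of_real r - of_int p + 1 = 0"
    then have "Re (complex_of_real r - of_int p + 1) = 0" by simp
    then show False using r p by simp
  qed
  show ?thesis unfolding np g1_Suc ip using nz nz2
    by (auto simp: eN_def negint_zero negint_real r field_simps)
qed

lemma E2: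
  assumes a: "a < 0"
  shows "eN (complex_of_real a) 0 (- int (q + 1)) / hh a (Suc q) = of_nat (Suc q) / hh a q"
proof -
  have nz: "hh a q \<noteq> 0" by (rule hh_nz[OF a])
  have nz2: "complex_of_real a - of_nat q \<noteq> 0"
  proof
    assume "complex_of_real a - of_nat q = 0"
    then have "Re (complex_of_real a - of_nat q) = 0" by simp
    then show False using a by simp
  qed
  show ?thesis unfolding hh_Suc using nz nz2
    by (auto simp: eN_def negint_zero negint_real a field_simps)
qed

lemma F1:
  assumes r: "r < 0" and p: "p \<ge> 0"
  shows "fN 0 (complex_of_real r) (p + 1) / g1 r (nat (p + 1)) = of_int (p + 1) / g1 r (nat p)"
proof -
  have np: "nat (p + 1) = Suc (nat p)" using p by simp
  have ip: "of_nat (nat p) = (of_int p :: complex)" using p by (simp add: of_nat_nat)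
  have nz: "g1 r (nat p) \<noteq> 0" by (rule g1_nz[OF r])
  have nz2: "complex_of_real r - of_int p \<noteq> 0"
  proof
    assume "complex_of_real r - of_int p = 0"
    then have "Re (complex_of_real r - of_int p) = 0" by simp
    then show False using r p by simp
  qed
  show ?thesis unfolding np g1_Suc ip using nz nz2
    by (auto simp: fN_def negint_zero negint_real r field_simps)
qed

lemma F2:
  assumes a: "a < 0" and q: "q > 0"
  shows "fN (complex_of_real a) 0 (- int (q - 1)) / hh a (q - 1) = (complex_of_real a - of_nat q + 1) / hh a q"
proof -
  obtain q' where q': "q = Suc q'" using q by (cases q) auto
  have nz: "hh a q' \<noteq> 0" by (rule hh_nz[OF a])
  have nz2: "complex_of_real a - of_nat q' \<noteq> 0"
  proof
    assume "complex_of_real a - of_nat q' = 0"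
    then have "Re (complex_of_real a - of_nat q') = 0" by simp
    then show False using a by simp
  qed
  show ?thesis unfolding q' hh_Suc using nz nz2
    by (auto simp: fN_def negint_zero negint_real a field_simps)
qed


lemma L2: "(\<Prod>j=1..n. (of_nat j - 1 - complex_of_real r)) = complex_of_real (pochhammer (-r) n)"
proof (induction n)
  case 0 then show ?case by simp
next
  case (Suc n)
  have "(\<Prod>j=1..Suc n. (of_nat j - 1 - complex_of_real r)) = (\<Prod>j=1..n. (of_nat j - 1 - complex_of_real r)) * (of_nat (Suc n) - 1 - complex_of_real r)"
    by (simp add: prod.nat_ivl_Suc' mult.commute)
  then show ?case using Suc by (simp add: pochhammer_Suc algebra_simps)
qed

lemma L2r: "(\<Prod>j=1..n. (real j - 1 - a)) = pochhammer (-a) n"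
proof (induction n)
  case 0 then show ?case by simp
next
  case (Suc n)
  have "(\<Prod>j=1..Suc n. (real j - 1 - a)) = (\<Prod>j=1..n. (real j - 1 - a)) * (real (Suc n) - 1 - a)"
    by (simp add: prod.nat_ivl_Suc' mult.commute)
  then show ?case using Suc by (simp add: pochhammer_Suc algebra_simps)
qed

lemma L1: "(\<Prod>j=1..n. (of_nat j + 0) / (of_nat j - 1 - cnj (complex_of_real r))) = complex_of_real (fact n / pochhammer (-r) n)"
proof (induction n)
  case 0 then show ?case by simp
next
  case (Suc n)
  have "(\<Prod>j=1..Suc n. (of_nat j + 0) / (of_nat j - 1 - cnj (complex_of_real r))) = (\<Prod>j=1..n. (of_nat j + 0) / (of_nat j - 1 - cnj (complex_of_real r))) * ((of_nat (Suc n) + 0) / (of_nat (Suc n) - 1 - cnj (complex_of_real r)))"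
    by (simp add: prod.nat_ivl_Suc' mult.commute)
  also have "\<dots> = complex_of_real (fact n / pochhammer (-r) n * (real (Suc n) / (real n - r)))"
    using Suc by simp
  also have "fact n / pochhammer (-r) n * (real (Suc n) / (real n - r)) = fact (Suc n) / pochhammer (-r) (Suc n)"
    by (simp add: pochhammer_Suc algebra_simps)
  finally show ?case .
qed

lemma L3: "cmod (\<Prod>i<n. (complex_of_real r - of_nat i))^2 = (pochhammer (-r) n)^2"
proof (induction n)
  case 0 then show ?case by simp
next
  case (Suc n)
  have "cmod (\<Prod>i<Suc n. (complex_of_real r - of_nat i)) = cmod (\<Prod>i<n. (complex_of_real r - of_nat i)) * cmod (complex_of_real r - of_nat n)"
    by (simp add: norm_mult)
  moreover have "cmod (complex_of_real r - of_nat n) = \<bar>r - real n\<bar>"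
    by (metis norm_of_real of_real_diff of_real_of_nat_eq)
  ultimately have "cmod (\<Prod>i<Suc n. (complex_of_real r - of_nat i))^2 = cmod (\<Prod>i<n. (complex_of_real r - of_nat i))^2 * (r - real n)^2"
    by (simp add: power_mult_distrib)
  then show ?case using Suc by (simp add: pochhammer_Suc power_mult_distrib power2_eq_square algebra_simps)
qed

lemma nx_conv:
  assumes r: "r < 0"
  shows "normsq_x 0 (complex_of_real r) (int n) = (cmod (g1 r n))^2 * nxg r n"
proof (cases "n = 0")
  case True then show ?thesis by (simp add: normsq_x_def g1_def nxg_def)
next
  case False
  have pp: "pochhammer (-r) n > 0" using r by (simp add: pochhammer_pos)
  show ?thesis
  proof (cases "r \<in> \<int>")
    case True
    then have "negint (complex_of_real r)" using r by (simp add: negint_real)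
    then have "normsq_x 0 (complex_of_real r) (int n) = fact n * pochhammer (-r) n"
      using False by (simp add: normsq_x_def L2[simplified])
    also have "\<dots> = (pochhammer (-r) n)^2 * nxg r n" using pp by (simp add: nxg_def power2_eq_square)
    finally show ?thesis using True by (simp add: g1_def L3)
  next
    case False': False
    then have "\<not> negint (complex_of_real r)" by (simp add: negint_real)
    then show ?thesis using False False' by (simp add: normsq_x_def L1[simplified] g1_def nxg_def)
  qed
qed

lemma ny_conv:
  assumes a: "a < 0"
  shows "normsq_y a n = (cmod (hh a n))^2 * nyg a n"
proof -
  have pp: "pochhammer (-a) n > 0" using a by (simp add: pochhammer_pos)
  show ?thesis
  proof (cases "a \<in> \<int>")
    case True
    then have "normsq_y a n = fact n * pochhammer (-a) n" by (simp add: normsq_y_def L2r[simplified])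
    also have "\<dots> = (pochhammer (-a) n)^2 * nyg a n" using pp by (simp add: nyg_def power2_eq_square)
    finally show ?thesis using True L3[of a n] by (simp add: hh_def)
  next
    case False
    then show ?thesis by (simp add: normsq_y_def L2r[simplified] hh_def nyg_def)
  qed
qed

lemma Vspace_conv:
  assumes r: "r < 0" and a: "a < 0"
  shows "conv r a u \<in> Vspace 0 (complex_of_real r) a \<longleftrightarrow> gterm r a u summable_on UNIV"
proof -
  have fs: "conv r a u \<in> FS 0 (complex_of_real r)"
    by (auto simp: FS_def Kset_0r[OF r] conv_def)
  have eq: "(\<lambda>(k, l). (cmod (conv r a u (k, l)))\<^sup>2 * normsq_x 0 (complex_of_real r) k * normsq_y a l) = gterm r a u"
  proof (intro ext, clarify)
    fix p :: int and q :: nat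
    show "(cmod (conv r a u (p, q)))\<^sup>2 * normsq_x 0 (complex_of_real r) p * normsq_y a q = gterm r a u (p,q)"
    proof (cases "p \<ge> 0")
      case True
      then have pe: "p = int (nat p)" by simp
      have nz: "g1 r (nat p) \<noteq> 0" "hh a q \<noteq> 0" using g1_nz[OF r] hh_nz[OF a] by auto
      have "normsq_x 0 (complex_of_real r) p = (cmod (g1 r (nat p)))^2 * nxg r (nat p)"
        by (subst pe) (rule nx_conv[OF r])
      then show ?thesis using True nz
        by (simp add: conv_def gterm_def ny_conv[OF a] norm_divide norm_mult power_divide power_mult_distrib field_simps)
    next
      case False then show ?thesis by (simp add: conv_def gterm_def)
    qed
  qed
  show ?thesis using fs eq by (simp add: Vspace_def)
qed


lemma act_conv_E:
  assumes r: "r < 0" and a: "a < 0" and u0: "\<And>p q. p < 0 \<Longrightarrow> u (p,q) = 0"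
  shows "actV E 0 (complex_of_real r) a (conv r a u) = conv r a (opE r u)"
proof (intro ext, clarify)
  fix p :: int and q :: nat
  show "actV E 0 (complex_of_real r) a (conv r a u) (p,q) = conv r a (opE r u) (p,q)"
  proof (cases "p \<ge> 0")
    case False
    then show ?thesis by (simp add: actV_def Kset_0r[OF r] conv_def)
  next
    case True
    have nz: "g1 r (nat p) \<noteq> 0" "hh a q \<noteq> 0" "hh a (Suc q) \<noteq> 0" using g1_nz[OF r] hh_nz[OF a] by auto
    have t1: "eN 0 (complex_of_real r) (p - 1) * conv r a u (p - 1, q)
        = (complex_of_real r - of_int p + 1) * u (p-1, q) / (g1 r (nat p) * hh a q)"
    proof (cases "p = 0")
      case True then show ?thesis using u0[of "-1" q] by (simp add: conv_def)
    next
      case False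
      then have p1: "p \<ge> 1" "p - 1 \<ge> 0" using True by auto
      have nz1: "g1 r (nat (p - 1)) \<noteq> 0" using g1_nz[OF r] by auto
      have "eN 0 (complex_of_real r) (p - 1) * conv r a u (p - 1, q)
          = (eN 0 (complex_of_real r) (p - 1) / g1 r (nat (p - 1))) * u (p-1,q) / hh a q"
        using p1 nz1 nz by (simp add: conv_def)
      also have "\<dots> = (complex_of_real r - of_int p + 1) / g1 r (nat p) * u (p-1,q) / hh a q"
        unfolding E1[OF r p1(1)] ..
      finally show ?thesis by simp
    qed
    have t2: "eN (complex_of_real a) 0 (- int (q + 1)) * conv r a u (p, q + 1)
        = of_nat (Suc q) * u (p, Suc q) / (g1 r (nat p) * hh a q)"
    proof -
      have "eN (complex_of_real a) 0 (- int (q + 1)) * conv r a u (p, q + 1)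
          = (eN (complex_of_real a) 0 (- int (q + 1)) / hh a (Suc q)) * u (p, Suc q) / g1 r (nat p)"
        using True nz by (simp add: conv_def)
      also have "\<dots> = of_nat (Suc q) / hh a q * u (p, Suc q) / g1 r (nat p)"
        unfolding E2[OF a] ..
      finally show ?thesis by simp
    qed
    have "actV E 0 (complex_of_real r) a (conv r a u) (p,q)
        = eN 0 (complex_of_real r) (p - 1) * conv r a u (p - 1, q) + eN (complex_of_real a) 0 (- int (q + 1)) * conv r a u (p, q + 1)"
      using True by (simp add: actV_def Kset_0r[OF r])
    also have "\<dots> = conv r a (opE r u) (p,q)"
      unfolding t1 t2 using True by (simp add: conv_def opE_def add_divide_distrib)
    finally show ?thesis .
  qed
qed

lemma act_conv_F:
  assumes r: "r < 0" and a: "a < 0"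
  shows "actV F 0 (complex_of_real r) a (conv r a u) = conv r a (opF a u)"
proof (intro ext, clarify)
  fix p :: int and q :: nat
  show "actV F 0 (complex_of_real r) a (conv r a u) (p,q) = conv r a (opF a u) (p,q)"
  proof (cases "p \<ge> 0")
    case False
    then show ?thesis by (simp add: actV_def Kset_0r[OF r] conv_def)
  next
    case True
    have nz: "g1 r (nat p) \<noteq> 0" "hh a q \<noteq> 0" using g1_nz[OF r] hh_nz[OF a] by auto
    have t1: "fN 0 (complex_of_real r) (p + 1) * conv r a u (p + 1, q)
        = of_int (p + 1) * u (p+1, q) / (g1 r (nat p) * hh a q)"
    proof -
      have nz1: "g1 r (nat (p + 1)) \<noteq> 0" using g1_nz[OF r] by auto
      have "fN 0 (complex_of_real r) (p + 1) * conv r a u (p + 1, q)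
          = (fN 0 (complex_of_real r) (p + 1) / g1 r (nat (p + 1))) * u (p+1,q) / hh a q"
        using True nz1 nz by (simp add: conv_def)
      also have "\<dots> = of_int (p + 1) / g1 r (nat p) * u (p+1,q) / hh a q"
        unfolding F1[OF r True] ..
      finally show ?thesis by simp
    qed
    have t2: "(if q > 0 then fN (complex_of_real a) 0 (- int (q - 1)) * conv r a u (p, q - 1) else 0)
        = (if q > 0 then (complex_of_real a - of_nat q + 1) * u (p, q - 1) else 0) / (g1 r (nat p) * hh a q)"
    proof (cases "q > 0")
      case True': True
      have nz1: "hh a (q - 1) \<noteq> 0" using hh_nz[OF a] by auto
      have "fN (complex_of_real a) 0 (- int (q - 1)) * conv r a u (p, q - 1)
          = (fN (complex_of_real a) 0 (- int (q - 1)) / hh a (q - 1)) * u (p, q - 1) / g1 r (nat p)"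
        using True nz1 nz by (simp add: conv_def)
      also have "\<dots> = (complex_of_real a - of_nat q + 1) / hh a q * u (p, q - 1) / g1 r (nat p)"
        unfolding F2[OF a True'] ..
      finally show ?thesis using True' by simp
    qed simp
    have "actV F 0 (complex_of_real r) a (conv r a u) (p,q)
        = fN 0 (complex_of_real r) (p + 1) * conv r a u (p + 1, q)
          + (if q > 0 then fN (complex_of_real a) 0 (- int (q - 1)) * conv r a u (p, q - 1) else 0)"
      using True by (simp add: actV_def Kset_0r[OF r])
    also have "\<dots> = conv r a (opF a u) (p,q)"
      unfolding t1 t2 using True by (simp add: conv_def opF_def add_divide_distrib)
    finally show ?thesis .
  qed
qed

lemma act_conv_H:
  assumes r: "r < 0" and a: "a < 0"
  shows "actV H 0 (complex_of_real r) a (conv r a u) = conv r a (opH r a u)"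
proof (intro ext, clarify)
  fix p :: int and q :: nat
  show "actV H 0 (complex_of_real r) a (conv r a u) (p,q) = conv r a (opH r a u) (p,q)"
  proof (cases "p \<ge> 0")
    case True
    have hs: "hN 0 (complex_of_real r) p + hN (complex_of_real a) 0 (- int q) = - of_real r + 2 * of_int p + of_real a - 2 * of_nat q"
      by (simp add: hN_def algebra_simps)
    show ?thesis using True by (simp add: actV_def Kset_0r[OF r] conv_def opH_def hs)
  qed (simp add: actV_def Kset_0r[OF r] conv_def)
qed


lemma VV_nonzero:
  assumes s: "s = real m - a" and lam: "a - r - 2 * real m > 0"
  shows "\<exists>p q. VV r m s k (p,q) \<noteq> 0"
proof (induction k)
  case 0
  have "bb s 0 = 1" by (simp add: bb_def)
  then have "VV r m s 0 (0, m) = 1" by (simp add: VV_def w0_def)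
  then show ?case by (intro exI[of _ 0] exI[of _ m]) simp
next
  case (Suc k)
  then obtain p q where pq: "VV r m s k (p,q) \<noteq> 0" by blast
  have c: "- (of_nat (Suc k) * (complex_of_real (a - r - 2 * real m) + of_nat k)) \<noteq> 0"
  proof
    assume "- (of_nat (Suc k) * (complex_of_real (a - r - 2 * real m) + of_nat k)) = 0"
    moreover have "(1 + complex_of_nat k) \<noteq> 0"
      by (metis of_nat_Suc of_nat_neq_0 add.commute Suc_neq_Zero)
    ultimately have "complex_of_real (a - r - 2 * real m) + of_nat k = 0" by simp
    then have "Re (complex_of_real (a - r - 2 * real m) + of_nat k) = 0" by simp
    then show False using lam by simp
  qed
  show ?case
  proof (rule ccontr)
    assume "\<not> ?case"
    then have z: "VV r m s (Suc k) = (\<lambda>_. 0)" by auto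
    have "opF a (VV r m s (Suc k)) (p,q) = 0" unfolding z by (simp add: opF_def)
    then show False using VV_F[OF s, of r k] pq c by simp
  qed
qed

locale setting =
  fixes r a :: real and m :: nat and c2 :: complex
  assumes r: "r < 0" and a: "a < 0" and lam: "a - r - 2 * real m > 0"
    and c2: "c2 = - complex_of_real (a - r - 2 * real m)"
begin

definition ek :: "int \<Rightarrow> complex" where "ek k = eN 0 c2 k"
definition gam :: "int \<Rightarrow> complex" where "gam k = 1 / (\<Prod>i<nat k. ek (int i))"
definition WW :: "int \<Rightarrow> int \<times> nat \<Rightarrow> complex" where
  "WW k = (\<lambda>x. if k \<ge> 0 then gam k * VV r m (real m - a) (nat k) x else 0)"

lemma c2_not_nonneg: "Re c2 < 0" using c2 lam by simp

lemma ek_nz: "k \<ge> 0 \<Longrightarrow> ek k \<noteq> 0"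
proof -
  assume k: "k \<ge> 0"
  show ?thesis
  proof (cases "negint c2")
    case True then show ?thesis by (simp add: ek_def eN_def negint_zero)
  next
    case False
    have "Re (c2 - of_int k) < 0" using c2_not_nonneg k by simp
    then have "c2 - of_int k \<noteq> 0" by auto
    then show ?thesis using False by (simp add: ek_def eN_def negint_zero)
  qed
qed

lemma gam_nz: "gam k \<noteq> 0"
  using ek_nz by (simp add: gam_def prod_zero_iff)

lemma gam_rec: "k \<ge> 0 \<Longrightarrow> gam k = ek k * gam (k + 1)"
proof -
  assume k: "k \<ge> 0"
  have n: "nat (k + 1) = Suc (nat k)" using k by simp
  have "(\<Prod>i<nat k. ek (int i)) \<noteq> 0" using ek_nz by (simp add: prod_zero_iff)
  then show ?thesis using ek_nz[OF k] k unfolding gam_def n by (simp add: field_simps)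
qed

lemma fe: "k \<ge> 1 \<Longrightarrow> fN 0 c2 k * eN 0 c2 (k - 1) = of_int k * (c2 - of_int k + 1)"
  by (cases "negint c2") (simp_all add: fN_def eN_def negint_zero algebra_simps)

lemma WW_neg: "p < 0 \<Longrightarrow> WW k (p,q) = 0"
  by (simp add: WW_def VV_neg)

lemma WW_E: "k \<ge> 0 \<Longrightarrow> opE r (WW k) = (\<lambda>x. ek k * WW (k + 1) x)"
proof -
  assume k: "k \<ge> 0"
  have n: "nat (k + 1) = Suc (nat k)" using k by simp
  have "opE r (WW k) = (\<lambda>x. gam k * VV r m (real m - a) (Suc (nat k)) x)"
    using k by (simp add: WW_def opE_scale VV_Suc)
  also have "\<dots> = (\<lambda>x. ek k * WW (k + 1) x)"
    using k by (simp add: WW_def n gam_rec[OF k] mult.assoc)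
  finally show ?thesis .
qed

lemma WW_F: "k \<ge> 0 \<Longrightarrow> opF a (WW k) = (\<lambda>x. fN 0 c2 k * WW (k - 1) x)"
proof -
  assume k: "k \<ge> 0"
  show ?thesis
  proof (cases "k = 0")
    case True
    then show ?thesis using VV_F0[of "real m - a" m a r] by (simp add: WW_def opF_scale)
  next
    case False
    then have k1: "k \<ge> 1" using k by simp
    have n: "nat k = Suc (nat (k - 1))" using k1 by simp
    have ik: "of_nat (nat (k - 1)) = (of_int k - 1 :: complex)" using k1 by (simp add: of_nat_nat)
    have "opF a (WW k) = (\<lambda>x. gam k * (- (of_nat (Suc (nat (k-1))) * (complex_of_real (a - r - 2 * real m) + of_nat (nat (k-1))))) * VV r m (real m - a) (nat (k-1)) x)"
      using k unfolding WW_def by (simp add: opF_scale n VV_F[of "real m - a" m a r] mult.assoc)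
    also have "\<dots> = (\<lambda>x. fN 0 c2 k * WW (k - 1) x)"
    proof
      fix x
      have g: "gam (k - 1) = ek (k - 1) * gam k" using gam_rec[of "k-1"] k1 by simp
      have "gam k * (- (of_nat (Suc (nat (k-1))) * (complex_of_real (a - r - 2 * real m) + of_nat (nat (k-1)))))
          = gam k * (of_int k * (c2 - of_int k + 1))"
        using k1 unfolding c2 ik by (simp add: of_nat_nat algebra_simps)
      also have "\<dots> = fN 0 c2 k * gam (k - 1)"
        unfolding g fe[OF k1, symmetric] ek_def by (simp add: algebra_simps)
      finally show "gam k * (- (of_nat (Suc (nat (k-1))) * (complex_of_real (a - r - 2 * real m) + of_nat (nat (k-1))))) * VV r m (real m - a) (nat (k-1)) x
          = fN 0 c2 k * WW (k - 1) x"
        using k1 by (simp add: WW_def)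
    qed
    finally show ?thesis .
  qed
qed

lemma WW_H: "opH r a (WW k) = (\<lambda>x. hN 0 c2 k * WW k x)"
proof (cases "k \<ge> 0")
  case True
  have h: "hN 0 c2 k = complex_of_real (a - r - 2 * real m) + 2 * of_nat (nat k)"
    using True by (simp add: hN_def c2 of_nat_nat)
  show ?thesis using True unfolding WW_def h by (simp add: opH_scale VV_H ac_simps)
next
  case False
  then show ?thesis by (auto simp add: WW_def opH_def)
qed

lemma WW_line: "WW k (p,q) \<noteq> 0 \<Longrightarrow> k \<ge> 0 \<and> int q = p + int m - k"
proof -
  assume nz: "WW k (p,q) \<noteq> 0"
  then have k: "k \<ge> 0" by (simp add: WW_def split: if_splits)
  obtain \<rho> where \<rho>: "\<And>p q. VV r m (real m - a) (nat k) (p,q) =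
     (if int q = p + int m - int (nat k) then (\<Sum>i\<le>nat k. \<rho> i * of_real (bb (real m - a) (p - int i))) else 0)"
    using VV_rep[of "real m - a" m a r "nat k"] by blast
  show ?thesis using nz k by (auto simp: WW_def \<rho> split: if_splits)
qed

lemma WW_nz: "k \<ge> 0 \<Longrightarrow> \<exists>p q. p \<ge> 0 \<and> WW k (p,q) \<noteq> 0"
proof -
  assume k: "k \<ge> 0"
  obtain p q where pq: "VV r m (real m - a) (nat k) (p,q) \<noteq> 0"
    using VV_nonzero[of "real m - a" m a r "nat k"] lam by blast
  then have "p \<ge> 0" using VV_neg by force
  then show ?thesis using pq k gam_nz by (auto simp: WW_def)
qed

lemma WW_summable:
  assumes cond: "2 * (real m - a) + r + a < -1"
  shows "gterm r a (WW k) summable_on UNIV"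
proof (cases "k \<ge> 0")
  case True
  have "gterm r a (VV r m (real m - a) (nat k)) summable_on UNIV"
    by (rule VV_summable) (use a r cond in auto)
  then have "(\<lambda>x. (cmod (gam k))^2 * gterm r a (VV r m (real m - a) (nat k)) x) summable_on UNIV"
    by (rule summable_on_cmult_right)
  moreover have "gterm r a (WW k) = (\<lambda>x. (cmod (gam k))^2 * gterm r a (VV r m (real m - a) (nat k)) x)"
    using True by (auto simp: gterm_def WW_def norm_mult power_mult_distrib)
  ultimately show ?thesis by simp
next
  case False
  then have "gterm r a (WW k) = (\<lambda>_. 0)" by (auto simp: gterm_def WW_def)
  then show ?thesis by simp
qed

end


lemma opE_sum: "opE r (\<lambda>x. \<Sum>k\<in>S. c k * W k x) = (\<lambda>x. \<Sum>k\<in>S. c k * opE r (W k) x)"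
  by (intro ext, clarify) (simp add: opE_def sum_distrib_left sum.distrib distrib_left mult.left_commute)
lemma opF_sum: "opF a (\<lambda>x. \<Sum>k\<in>S. c k * W k x) = (\<lambda>x. \<Sum>k\<in>S. c k * opF a (W k) x)"
  by (intro ext, clarify) (simp add: opF_def sum_distrib_left sum.distrib distrib_left mult.left_commute)
lemma opH_sum: "opH r a (\<lambda>x. \<Sum>k\<in>S. c k * W k x) = (\<lambda>x. \<Sum>k\<in>S. c k * opH r a (W k) x)"
  by (intro ext, clarify) (simp add: opH_def sum_distrib_left mult.left_commute)

lemma conv_add: "conv r a (\<lambda>x. u x + w x) = (\<lambda>x. conv r a u x + conv r a w x)"
  by (auto simp: conv_def add_divide_distrib)
lemma conv_scale: "conv r a (\<lambda>x. c * u x) = (\<lambda>x. c * conv r a u x)"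
  by (auto simp: conv_def)

lemma gterm_scale: "gterm r a (\<lambda>x. c * u x) = (\<lambda>x. (cmod c)^2 * gterm r a u x)"
  by (auto simp: gterm_def norm_mult power_mult_distrib)

lemma gterm_add_le:
  assumes r: "r < 0" and a: "a < 0"
  shows "gterm r a (\<lambda>x. u x + w x) x \<le> 2 * gterm r a u x + 2 * gterm r a w x"
proof (cases x)
  case (Pair p q)
  show ?thesis
  proof (cases "p \<ge> 0")
    case True
    have n: "(cmod (u (p,q) + w (p,q)))^2 \<le> 2 * (cmod (u (p,q)))^2 + 2 * (cmod (w (p,q)))^2"
    proof -
      have "cmod (u (p,q) + w (p,q)) \<le> cmod (u (p,q)) + cmod (w (p,q))" by (rule norm_triangle_ineq)
      then have "(cmod (u (p,q) + w (p,q)))^2 \<le> (cmod (u (p,q)) + cmod (w (p,q)))^2"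
        by (intro power_mono) auto
      also have "\<dots> \<le> 2 * (cmod (u (p,q)))^2 + 2 * (cmod (w (p,q)))^2"
        using sum_squares_ge_zero[of "cmod (u (p,q)) - cmod (w (p,q))" 0]
        by (simp add: power2_eq_square algebra_simps)
      finally show ?thesis .
    qed
    have pos: "nxg r (nat p) * nyg a q \<ge> 0" using nxg_pos[OF r] nyg_pos[OF a]
      by (simp add: less_imp_le)
    have "(cmod (u (p,q) + w (p,q)))^2 * (nxg r (nat p) * nyg a q)
          \<le> (2 * (cmod (u (p,q)))^2 + 2 * (cmod (w (p,q)))^2) * (nxg r (nat p) * nyg a q)"
      by (rule mult_right_mono[OF n pos])
    then show ?thesis using Pair True by (simp add: gterm_def algebra_simps)
  next
    case False
    then show ?thesis using Pair by (simp add: gterm_def)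
  qed
qed

lemma gterm_sum_summable:
  assumes r: "r < 0" and a: "a < 0" and fin: "finite S"
    and sW: "\<And>k. k \<in> S \<Longrightarrow> gterm r a (W k) summable_on UNIV"
  shows "gterm r a (\<lambda>x. \<Sum>k\<in>S. c k * W k x) summable_on UNIV"
  using fin sW
proof (induction S rule: finite_induct)
  case empty
  have "gterm r a (\<lambda>x. \<Sum>k\<in>{}. c k * W k x) = (\<lambda>_. 0)" by (auto simp: gterm_def)
  then show ?case by simp
next
  case (insert k S)
  have s1: "gterm r a (\<lambda>x. \<Sum>k\<in>S. c k * W k x) summable_on UNIV" using insert by auto
  have s2: "gterm r a (\<lambda>x. c k * W k x) summable_on UNIV"
    unfolding gterm_scale using insert by (intro summable_on_cmult_right) auto
  have s3: "(\<lambda>x. 2 * gterm r a (\<lambda>x. c k * W k x) x + 2 * gterm r a (\<lambda>x. \<Sum>k\<in>S. c k * W k x) x) summable_on UNIV"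
    by (intro summable_on_add summable_on_cmult_right s1 s2)
  have eq: "(\<lambda>x. \<Sum>k\<in>insert k S. c k * W k x) = (\<lambda>x. c k * W k x + (\<Sum>k\<in>S. c k * W k x))"
    using insert by simp
  show ?case unfolding eq
    by (rule summable_on_comparison_test[OF s3]) (auto intro: gterm_add_le[OF r a] gterm_nonneg[OF r a])
qed

context setting
begin

lemma Kset_c2: "Kset 0 c2 = {k. k \<ge> 0}"
  using c2_not_nonneg by (auto simp: Kset_def)

definition Phi :: "(int \<Rightarrow> complex) \<Rightarrow> int \<times> nat \<Rightarrow> complex" where
  "Phi v = (\<lambda>x. \<Sum>k\<in>{k. v k \<noteq> 0}. v k * WW k x)"

definition phi :: "(int \<Rightarrow> complex) \<Rightarrow> int \<times> nat \<Rightarrow> complex" where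
  "phi v = conv r a (Phi v)"

lemma Phi_sum:
  assumes "finite S" "{k. v k \<noteq> 0} \<subseteq> S"
  shows "Phi v = (\<lambda>x. \<Sum>k\<in>S. v k * WW k x)"
  unfolding Phi_def
proof
  fix x
  show "(\<Sum>k\<in>{k. v k \<noteq> 0}. v k * WW k x) = (\<Sum>k\<in>S. v k * WW k x)"
    by (rule sum.mono_neutral_left) (use assms in auto)
qed

lemma Nmod_supp: "v \<in> Nmod 0 c2 \<Longrightarrow> finite {k. v k \<noteq> 0} \<and> {k. v k \<noteq> 0} \<subseteq> {k. k \<ge> 0}"
  using Kset_c2 by (auto simp: Nmod_def)

lemma Phi_neg: "p < 0 \<Longrightarrow> Phi v (p,q) = 0"
  by (simp add: Phi_def WW_neg)

end


context setting
begin

lemma actN_E: "actN E c1 c2' v j = (if j \<in> Kset c1 c2' then eN c1 c2' (j - 1) * v (j - 1) else 0)"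
  by (simp add: actN_def)
lemma actN_F: "actN F c1 c2' v j = (if j \<in> Kset c1 c2' then fN c1 c2' (j + 1) * v (j + 1) else 0)"
  by (simp add: actN_def)
lemma actN_H: "actN H c1 c2' v j = (if j \<in> Kset c1 c2' then hN c1 c2' j * v j else 0)"
  by (simp add: actN_def)

lemma supp_fin: "v \<in> Nmod 0 c2 \<Longrightarrow> finite {k. v k \<noteq> 0}"
  using Nmod_supp by blast
lemma supp_pos: "v \<in> Nmod 0 c2 \<Longrightarrow> v k \<noteq> 0 \<Longrightarrow> k \<ge> 0"
  using Nmod_supp by blast

lemma Phi_self: "v \<in> Nmod 0 c2 \<Longrightarrow> Phi v = (\<lambda>x. \<Sum>k\<in>{k. v k \<noteq> 0}. v k * WW k x)"
  by (simp add: Phi_def)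

lemma phi_V:
  assumes cond: "2 * (real m - a) + r + a < -1" and v: "v \<in> Nmod 0 c2"
  shows "phi v \<in> Vspace 0 (complex_of_real r) a"
  unfolding phi_def Vspace_conv[OF r a] Phi_def
  by (rule gterm_sum_summable[OF r a supp_fin[OF v]]) (rule WW_summable[OF cond])

lemma phi_add:
  assumes v: "v \<in> Nmod 0 c2" and w: "w \<in> Nmod 0 c2"
  shows "phi (\<lambda>k. v k + w k) = (\<lambda>p. phi v p + phi w p)"
proof -
  define S where "S = {k. v k \<noteq> 0} \<union> {k. w k \<noteq> 0}"
  have fS: "finite S" using supp_fin[OF v] supp_fin[OF w] by (simp add: S_def)
  have "Phi (\<lambda>k. v k + w k) = (\<lambda>x. \<Sum>k\<in>S. (v k + w k) * WW k x)"
    by (rule Phi_sum[OF fS]) (auto simp: S_def)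
  also have "\<dots> = (\<lambda>x. (\<Sum>k\<in>S. v k * WW k x) + (\<Sum>k\<in>S. w k * WW k x))"
    by (simp add: distrib_right sum.distrib)
  also have "\<dots> = (\<lambda>x. Phi v x + Phi w x)"
    using Phi_sum[OF fS, of v] Phi_sum[OF fS, of w] by (auto simp: S_def)
  finally show ?thesis unfolding phi_def by (simp add: conv_add)
qed

lemma phi_scale:
  assumes v: "v \<in> Nmod 0 c2"
  shows "phi (\<lambda>k. s * v k) = (\<lambda>p. s * phi v p)"
proof -
  define S where "S = {k. v k \<noteq> 0}"
  have fS: "finite S" using supp_fin[OF v] by (simp add: S_def)
  have "Phi (\<lambda>k. s * v k) = (\<lambda>x. \<Sum>k\<in>S. (s * v k) * WW k x)"
    by (rule Phi_sum[OF fS]) (auto simp: S_def)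
  also have "\<dots> = (\<lambda>x. s * Phi v x)"
    using Phi_sum[OF fS, of v] by (simp add: S_def sum_distrib_left mult.assoc)
  finally show ?thesis unfolding phi_def by (simp add: conv_scale)
qed

lemma Phi_E:
  assumes v: "v \<in> Nmod 0 c2"
  shows "Phi (actN E 0 c2 v) = opE r (Phi v)"
proof -
  define S where "S = {k. v k \<noteq> 0}"
  have fS: "finite S" using supp_fin[OF v] by (simp add: S_def)
  have S0: "\<And>k. k \<in> S \<Longrightarrow> k \<ge> 0" using supp_pos[OF v] by (auto simp: S_def)
  have inj: "inj_on (\<lambda>k. k + 1) S" by (auto simp: inj_on_def)
  have "Phi (actN E 0 c2 v) = (\<lambda>x. \<Sum>j\<in>(\<lambda>k. k + 1) ` S. actN E 0 c2 v j * WW j x)"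
  proof (rule Phi_sum)
    show "finite ((\<lambda>k. k + 1) ` S)" using fS by simp
    show "{k. actN E 0 c2 v k \<noteq> 0} \<subseteq> (\<lambda>k. k + 1) ` S"
    proof
      fix j assume "j \<in> {k. actN E 0 c2 v k \<noteq> 0}"
      then have "v (j - 1) \<noteq> 0" by (auto simp: actN_E split: if_splits)
      then have "j - 1 \<in> S" by (simp add: S_def)
      then show "j \<in> (\<lambda>k. k + 1) ` S" by (metis diff_add_cancel image_eqI)
    qed
  qed
  also have "\<dots> = (\<lambda>x. \<Sum>k\<in>S. actN E 0 c2 v (k + 1) * WW (k + 1) x)"
    by (simp add: sum.reindex[OF inj])
  also have "\<dots> = (\<lambda>x. \<Sum>k\<in>S. v k * opE r (WW k) x)"
  proof (intro ext sum.cong refl)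
    fix x k assume k: "k \<in> S"
    then have "k + 1 \<in> Kset 0 c2" using S0 Kset_c2 by auto
    then show "actN E 0 c2 v (k + 1) * WW (k + 1) x = v k * opE r (WW k) x"
      using WW_E[OF S0[OF k]] by (simp add: actN_E ek_def)
  qed
  also have "\<dots> = opE r (Phi v)"
    unfolding Phi_sum[OF fS, of v, simplified S_def, OF subset_refl] opE_sum[symmetric] S_def ..
  finally show ?thesis .
qed

lemma Phi_F:
  assumes v: "v \<in> Nmod 0 c2"
  shows "Phi (actN F 0 c2 v) = opF a (Phi v)"
proof -
  define S where "S = {k. v k \<noteq> 0}"
  have fS: "finite S" using supp_fin[OF v] by (simp add: S_def)
  have S0: "\<And>k. k \<in> S \<Longrightarrow> k \<ge> 0" using supp_pos[OF v] by (auto simp: S_def)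
  have inj: "inj_on (\<lambda>k. k - 1) S" by (auto simp: inj_on_def)
  have "Phi (actN F 0 c2 v) = (\<lambda>x. \<Sum>j\<in>(\<lambda>k. k - 1) ` S. actN F 0 c2 v j * WW j x)"
  proof (rule Phi_sum)
    show "finite ((\<lambda>k. k - 1) ` S)" using fS by simp
    show "{k. actN F 0 c2 v k \<noteq> 0} \<subseteq> (\<lambda>k. k - 1) ` S"
    proof
      fix j assume "j \<in> {k. actN F 0 c2 v k \<noteq> 0}"
      then have "v (j + 1) \<noteq> 0" by (auto simp: actN_F split: if_splits)
      then have "j + 1 \<in> S" by (simp add: S_def)
      then show "j \<in> (\<lambda>k. k - 1) ` S" by (metis add_diff_cancel image_eqI)
    qed
  qed
  also have "\<dots> = (\<lambda>x. \<Sum>k\<in>S. actN F 0 c2 v (k - 1) * WW (k - 1) x)"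
    by (simp add: sum.reindex[OF inj])
  also have "\<dots> = (\<lambda>x. \<Sum>k\<in>S. v k * opF a (WW k) x)"
  proof (intro ext sum.cong refl)
    fix x k assume k: "k \<in> S"
    show "actN F 0 c2 v (k - 1) * WW (k - 1) x = v k * opF a (WW k) x"
    proof (cases "k \<ge> 1")
      case True
      then have "k - 1 \<in> Kset 0 c2" using Kset_c2 by auto
      then show ?thesis using WW_F[OF S0[OF k]] by (simp add: actN_F)
    next
      case False
      then have k0: "k = 0" using S0[OF k] by simp
      have "WW (-1) x = 0" by (simp add: WW_def)
      then show ?thesis using WW_F[of 0] k0 by simp
    qed
  qed
  also have "\<dots> = opF a (Phi v)"
    unfolding Phi_sum[OF fS, of v, simplified S_def, OF subset_refl] opF_sum[symmetric] S_def ..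
  finally show ?thesis .
qed

lemma Phi_H:
  assumes v: "v \<in> Nmod 0 c2"
  shows "Phi (actN H 0 c2 v) = opH r a (Phi v)"
proof -
  define S where "S = {k. v k \<noteq> 0}"
  have fS: "finite S" using supp_fin[OF v] by (simp add: S_def)
  have S0: "\<And>k. k \<in> S \<Longrightarrow> k \<ge> 0" using supp_pos[OF v] by (auto simp: S_def)
  have "Phi (actN H 0 c2 v) = (\<lambda>x. \<Sum>k\<in>S. actN H 0 c2 v k * WW k x)"
    by (rule Phi_sum[OF fS]) (auto simp: S_def actN_H split: if_splits)
  also have "\<dots> = (\<lambda>x. \<Sum>k\<in>S. v k * opH r a (WW k) x)"
  proof (intro ext sum.cong refl)
    fix x k assume k: "k \<in> S"
    then have "k \<in> Kset 0 c2" using S0 Kset_c2 by auto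
    then show "actN H 0 c2 v k * WW k x = v k * opH r a (WW k) x"
      by (simp add: actN_H WW_H)
  qed
  also have "\<dots> = opH r a (Phi v)"
    unfolding Phi_sum[OF fS, of v, simplified S_def, OF subset_refl] opH_sum[symmetric] S_def ..
  finally show ?thesis .
qed

lemma phi_act:
  assumes v: "v \<in> Nmod 0 c2"
  shows "phi (actN X 0 c2 v) = actV X 0 (complex_of_real r) a (phi v)"
proof (cases X)
  case H
  then show ?thesis unfolding phi_def using Phi_H[OF v] act_conv_H[OF r a] by simp
next
  case E
  then show ?thesis unfolding phi_def using Phi_E[OF v] act_conv_E[of r a "Phi v", OF r a Phi_neg] by simp
next
  case F
  then show ?thesis unfolding phi_def using Phi_F[OF v] act_conv_F[OF r a] by simp
qed

lemma Phi_point: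
  assumes fS: "finite S" and sub: "{k. v k \<noteq> 0} \<subseteq> S" and k0: "k0 \<in> S"
    and nz: "WW k0 (p,q) \<noteq> 0"
  shows "Phi v (p,q) = v k0 * WW k0 (p,q)"
proof -
  have "Phi v (p,q) = (\<Sum>k\<in>S. v k * WW k (p,q))" using Phi_sum[OF fS sub] by simp
  also have "\<dots> = v k0 * WW k0 (p,q) + (\<Sum>k\<in>S - {k0}. v k * WW k (p,q))"
    by (rule sum.remove[OF fS k0])
  also have "(\<Sum>k\<in>S - {k0}. v k * WW k (p,q)) = 0"
  proof (rule sum.neutral, intro ballI)
    fix k assume k: "k \<in> S - {k0}"
    have "WW k (p,q) = 0"
    proof (rule ccontr)
      assume "WW k (p,q) \<noteq> 0"
      then have "int q = p + int m - k" using WW_line by blast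
      moreover have "int q = p + int m - k0" using WW_line[OF nz] by blast
      ultimately show False using k by auto
    qed
    then show "v k * WW k (p,q) = 0" by simp
  qed
  finally show ?thesis by simp
qed

lemma phi_inj: "inj_on phi (Nmod 0 c2)"
proof (rule inj_onI)
  fix v w assume v: "v \<in> Nmod 0 c2" and w: "w \<in> Nmod 0 c2" and eq: "phi v = phi w"
  show "v = w"
  proof (rule ccontr)
    assume "v \<noteq> w"
    then obtain k0 where k0: "v k0 \<noteq> w k0" by auto
    define S where "S = {k. v k \<noteq> 0} \<union> {k. w k \<noteq> 0}"
    have fS: "finite S" using supp_fin[OF v] supp_fin[OF w] by (simp add: S_def)
    have kS: "k0 \<in> S" using k0 by (auto simp: S_def)
    have kpos: "k0 \<ge> 0" using kS supp_pos[OF v] supp_pos[OF w] by (auto simp: S_def)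
    obtain p q where pq: "p \<ge> 0" "WW k0 (p,q) \<noteq> 0" using WW_nz[OF kpos] by blast
    have "phi v (p,q) = phi w (p,q)" using eq by simp
    then have "Phi v (p,q) = Phi w (p,q)"
      using pq(1) g1_nz[OF r] hh_nz[OF a] by (simp add: phi_def conv_def)
    then have "v k0 * WW k0 (p,q) = w k0 * WW k0 (p,q)"
      using Phi_point[OF fS _ kS pq(2), of v] Phi_point[OF fS _ kS pq(2), of w] by (auto simp: S_def)
    then show False using k0 pq(2) by simp
  qed
qed

theorem hs_exists:
  assumes cond: "2 * (real m - a) + r + a < -1"
  shows "hilbert_submodule 0 c2 0 (complex_of_real r) a"
  unfolding hilbert_submodule_def
  by (rule exI[of _ phi]) (use phi_V[OF cond] phi_add phi_scale phi_act phi_inj in auto)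

end


lemma lw_form:
  assumes u0: "\<And>p q. p < 0 \<Longrightarrow> u (p,q) = 0"
    and F0: "\<And>p q. p \<ge> 0 \<Longrightarrow> opF a u (p,q) = 0"
  shows "u (int n, q) = (if n \<le> q then u (0, q - n) * complex_of_real (bb (real (q - n) - a) (int n)) else 0)"
proof (induction n arbitrary: q)
  case 0
  have "bb s 0 = 1" for s by (simp add: bb_def)
  then show ?case by simp
next
  case (Suc n)
  have F: "of_int (int n + 1) * u (int n + 1, q) + (if q > 0 then (of_real a - of_nat q + 1) * u (int n, q - 1) else 0) = 0"
    using F0[of "int n" q] by (simp add: opF_def)
  have n1': "(of_int (int n + 1) :: complex) = of_nat (Suc n)" by simp
  have n1: "(of_int (int n + 1) :: complex) \<noteq> 0" unfolding n1' by (simp only: of_nat_eq_0_iff)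
  show ?case
  proof (cases q)
    case 0
    then have "u (int n + 1, 0) = 0" using F n1 by simp
    then show ?thesis using 0 by (simp add: add.commute)
  next
    case (Suc q')
    have F': "of_int (int n + 1) * u (int n + 1, Suc q') = (of_nat q' - of_real a) * u (int n, q')"
      using F Suc by (simp add: algebra_simps)
    show ?thesis
    proof (cases "n \<le> q'")
      case True
      define s where "s = real (q' - n) - a"
      have rec: "of_int (int n + 1) * bb s (int n + 1) = (of_int (int n) + s) * bb s (int n)"
        using bb_rec[of "int n + 1" s] by simp
      have ns: "of_int (int n) + s = real q' - a" using True by (simp add: s_def of_nat_diff)
      have rec': "of_int (int n + 1) * complex_of_real (bb s (int n + 1)) = (of_nat q' - of_real a) * complex_of_real (bb s (int n))"
      proof -
        have nsc: "complex_of_nat n + of_real s = of_nat q' - of_real a"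
          using arg_cong[OF ns, of complex_of_real] by simp
        show ?thesis using arg_cong[OF rec, of complex_of_real] nsc by simp
      qed
      have IH: "u (int n, q') = u (0, q' - n) * complex_of_real (bb s (int n))"
        using Suc.IH[of q'] True unfolding s_def by simp
      have "of_int (int n + 1) * u (int n + 1, Suc q') = (of_nat q' - of_real a) * (u (0, q' - n) * complex_of_real (bb s (int n)))"
        unfolding F' IH ..
      also have "\<dots> = u (0, q' - n) * ((of_nat q' - of_real a) * complex_of_real (bb s (int n)))"
        by (simp only: mult.left_commute)
      also have "\<dots> = of_int (int n + 1) * (u (0, q' - n) * complex_of_real (bb s (int n + 1)))"
        unfolding rec'[symmetric] by (simp only: mult.left_commute)
      finally have "of_int (int n + 1) * u (int n + 1, Suc q') = of_int (int n + 1) * (u (0, q' - n) * complex_of_real (bb s (int n + 1)))" .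
      then have "u (int n + 1, Suc q') = u (0, q' - n) * complex_of_real (bb s (int n + 1))"
        using n1 by simp
      then show ?thesis using Suc True by (simp add: s_def add.commute)
    next
      case False
      then have "u (int n, q') = 0" using Suc.IH[of q'] by simp
      then have "u (int n + 1, Suc q') = 0" using F' n1 by simp
      then show ?thesis using Suc False by (simp add: add.commute)
    qed
  qed
qed


lemma actNF: "actN F c1 c2' v j = (if j \<in> Kset c1 c2' then fN c1 c2' (j + 1) * v (j + 1) else 0)"
  by (simp add: actN_def)
lemma actNH: "actN H c1 c2' v j = (if j \<in> Kset c1 c2' then hN c1 c2' j * v j else 0)"
  by (simp add: actN_def)

lemma hs_basics:
  assumes "hilbert_submodule 0 c2 a1 a2 a"
  shows "\<exists>u. u \<in> Vspace a1 a2 a \<and> (\<exists>x. u x \<noteq> 0) \<and> actV F a1 a2 a u = (\<lambda>_. 0)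
           \<and> actV H a1 a2 a u = (\<lambda>x. (- c2) * u x)"
proof -
  obtain \<phi> where V: "\<forall>v \<in> Nmod 0 c2. \<phi> v \<in> Vspace a1 a2 a"
    and sc: "\<forall>v \<in> Nmod 0 c2. \<forall>s. \<phi> (\<lambda>k. s * v k) = (\<lambda>p. s * \<phi> v p)"
    and act: "\<forall>X. \<forall>v \<in> Nmod 0 c2. \<phi> (actN X 0 c2 v) = actV X a1 a2 a (\<phi> v)"
    and inj: "inj_on \<phi> (Nmod 0 c2)"
    using assms unfolding hilbert_submodule_def by blast
  define x0 where "x0 = (\<lambda>k::int. if k = 0 then (1::complex) else 0)"
  have K0: "0 \<in> Kset 0 c2" by (simp add: Kset_def)
  have Km1: "-1 \<notin> Kset 0 c2" by (simp add: Kset_def)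
  have x0N: "x0 \<in> Nmod 0 c2"
  proof -
    have "{k. x0 k \<noteq> 0} = {0}" by (auto simp: x0_def)
    then show ?thesis using K0 by (auto simp: Nmod_def x0_def)
  qed
  have zN: "(\<lambda>k::int. 0::complex) \<in> Nmod 0 c2" by (simp add: Nmod_def)
  have "\<phi> (\<lambda>k. 0 * x0 k) = (\<lambda>p. 0 * \<phi> x0 p)" using sc x0N by blast
  then have phi0: "\<phi> (\<lambda>k. 0) = (\<lambda>p. 0)" by simp
  have ne: "\<phi> x0 \<noteq> (\<lambda>p. 0)"
  proof
    assume "\<phi> x0 = (\<lambda>p. 0)"
    then have "\<phi> x0 = \<phi> (\<lambda>k. 0)" using phi0 by simp
    then have "x0 = (\<lambda>k. 0)" using inj x0N zN by (simp add: inj_on_def)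
    then have "x0 0 = 0" by simp
    then show False by (simp add: x0_def)
  qed
  have aF: "actN F 0 c2 x0 = (\<lambda>k. 0)"
  proof
    fix j
    show "actN F 0 c2 x0 j = 0"
    proof (cases "j = -1")
      case True then show ?thesis using Km1 by (simp add: actNF)
    next
      case False then have "j + 1 \<noteq> 0" by simp
      then show ?thesis by (simp add: actNF x0_def)
    qed
  qed
  have aH: "actN H 0 c2 x0 = (\<lambda>k. (- c2) * x0 k)"
  proof
    fix j
    show "actN H 0 c2 x0 j = (- c2) * x0 j"
      using K0 by (cases "j = 0") (auto simp: actNH x0_def hN_def)
  qed
  have "\<phi> x0 \<in> Vspace a1 a2 a" using V x0N by blast
  moreover have "\<exists>x. \<phi> x0 x \<noteq> 0" using ne by auto
  moreover have "actV F a1 a2 a (\<phi> x0) = (\<lambda>_. 0)"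
  proof -
    have "\<phi> (actN F 0 c2 x0) = actV F a1 a2 a (\<phi> x0)" using act x0N by blast
    then show ?thesis unfolding aF phi0 by simp
  qed
  moreover have "actV H a1 a2 a (\<phi> x0) = (\<lambda>x. (- c2) * \<phi> x0 x)"
  proof -
    have "\<phi> (actN H 0 c2 x0) = actV H a1 a2 a (\<phi> x0)" using act x0N by blast
    moreover have "\<phi> (\<lambda>k. (- c2) * x0 k) = (\<lambda>p. (- c2) * \<phi> x0 p)" using sc x0N by blast
    ultimately show ?thesis unfolding aH by simp
  qed
  ultimately show ?thesis by blast
qed

lemma part1:
  assumes "hilbert_submodule 0 (- lam) a1 a2 a"
  shows "\<exists>n0::int. lam = a1 + of_real a - a2 + 2 * of_int n0"
proof -
  obtain u where uV: "u \<in> Vspace a1 a2 a" and nz: "\<exists>x. u x \<noteq> 0"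
    and uH: "actV H a1 a2 a u = (\<lambda>x. (- (- lam)) * u x)"
    using hs_basics[OF assms] by blast
  obtain k l where kl: "u (k,l) \<noteq> 0" using nz by auto
  have kK: "k \<in> Kset a1 a2" using uV kl by (auto simp: Vspace_def FS_def)
  have "(hN a1 a2 k + hN (of_real a) 0 (- int l)) * u (k,l) = lam * u (k,l)"
    using fun_cong[OF uH, of "(k,l)"] kK by (simp add: actV_def)
  then have "hN a1 a2 k + hN (of_real a) 0 (- int l) = lam" using kl by simp
  then have "lam = a1 + of_real a - a2 + 2 * of_int (k - int l)"
    by (auto simp: hN_def algebra_simps)
  then show ?thesis by blast
qed

lemma part3_core:
  assumes a1: "a1 \<notin> \<int>" and a2: "a2 \<notin> \<int>"
  shows "\<not> hilbert_submodule 0 c2 a1 a2 a"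
proof
  assume "hilbert_submodule 0 c2 a1 a2 a"
  then obtain u where nz: "\<exists>x. u x \<noteq> 0" and uF: "actV F a1 a2 a u = (\<lambda>_. 0)"
    using hs_basics by blast
  have K: "Kset a1 a2 = UNIV" using a1 a2 by (auto simp: Kset_def)
  have ni: "\<not> negint a1" "\<not> negint a2" using a1 a2 by (auto simp: negint_def)
  have fnz: "fN a1 a2 k \<noteq> 0" for k
  proof
    assume "fN a1 a2 k = 0"
    then have "a1 = - of_int k" using ni by (simp add: fN_def add_eq_0_iff)
    then show False using a1 by (metis Ints_minus Ints_of_int)
  qed
  have F: "fN a1 a2 (k + 1) * u (k + 1, l) + (if l > 0 then fN (of_real a) 0 (- int (l - 1)) * u (k, l - 1) else 0) = 0" for k l
    using fun_cong[OF uF, of "(k,l)"] K by (simp add: actV_def)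
  have "\<forall>k. u (k, l) = 0" for l
  proof (induction l)
    case 0
    show ?case
    proof
      fix k
      show "u (k, 0) = 0" using F[of "k - 1" 0] fnz[of k] by simp
    qed
  next
    case (Suc l)
    show ?case
    proof
      fix k
      show "u (k, Suc l) = 0" using F[of "k - 1" "Suc l"] fnz[of k] Suc by simp
    qed
  qed
  then show False using nz by auto
qed


lemma part2_only_if:
  assumes r: "r < 0" and a: "a < 0"
    and hs: "hilbert_submodule 0 (- complex_of_real a + complex_of_real r - 2 * of_int n0) 0 (complex_of_real r) a"
  shows "1 + r - a < 2 * of_int n0 \<and> 2 * n0 \<le> 0"
proof -
  define lamc where "lamc = complex_of_real a - complex_of_real r + 2 * of_int n0"
  obtain u where uV: "u \<in> Vspace 0 (complex_of_real r) a" and nz: "\<exists>x. u x \<noteq> 0"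
    and uF: "actV F 0 (complex_of_real r) a u = (\<lambda>_. 0)"
    and uH: "actV H 0 (complex_of_real r) a u = (\<lambda>x. lamc * u x)"
    using hs_basics[OF hs] unfolding lamc_def by (auto simp: algebra_simps)
  define U where "U = (\<lambda>(p,q). if p \<ge> 0 then u (p,q) * (g1 r (nat p) * hh a q) else 0)"
  have U0: "\<And>p q. p < 0 \<Longrightarrow> U (p,q) = 0" by (simp add: U_def)
  have nzg: "\<And>p q. g1 r p * hh a q \<noteq> 0" using g1_nz[OF r] hh_nz[OF a] by simp
  have uc: "u = conv r a U"
  proof (intro ext, clarify)
    fix p :: int and q :: nat
    show "u (p,q) = conv r a U (p,q)"
    proof (cases "p \<ge> 0")
      case True then show ?thesis using nzg[of "nat p" q] by (simp add: conv_def U_def)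
    next
      case False
      then have "p \<notin> Kset 0 (complex_of_real r)" using Kset_0r[OF r] by simp
      then have "u (p,q) = 0" using uV by (simp add: Vspace_def FS_def)
      then show ?thesis using False by (simp add: conv_def)
    qed
  qed
  have F0: "\<And>p q. p \<ge> 0 \<Longrightarrow> opF a U (p,q) = 0"
  proof -
    fix p :: int and q :: nat assume p: "p \<ge> 0"
    have "conv r a (opF a U) (p,q) = 0" using uF act_conv_F[OF r a, of U] uc by simp
    then show "opF a U (p,q) = 0" using p nzg[of "nat p" q] by (simp add: conv_def)
  qed
  have H0: "\<And>j. opH r a U (0,j) = lamc * U (0,j)"
  proof -
    fix j :: nat
    have "conv r a (opH r a U) (0,j) = lamc * conv r a U (0,j)"
      using fun_cong[OF uH, of "(0,j)"] act_conv_H[OF r a, of U] uc by simp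
    then show "opH r a U (0,j) = lamc * U (0,j)" using nzg[of 0 j] by (simp add: conv_def)
  qed
  have wt: "\<And>j. U (0,j) \<noteq> 0 \<Longrightarrow> n0 = - int j"
  proof -
    fix j assume nzj: "U (0,j) \<noteq> 0"
    have "(- of_real r + of_real a - 2 * of_nat j) * U (0,j) = lamc * U (0,j)"
      using H0[of j] by (simp add: opH_def)
    then have "- complex_of_real r + of_real a - 2 * of_nat j = lamc" using nzj by simp
    then have "Re (- complex_of_real r + of_real a - 2 * of_nat j) = Re lamc" by simp
    then have "- 2 * real j = 2 * of_int n0" by (simp add: lamc_def)
    then show "n0 = - int j" by linarith
  qed
  have lwf: "\<And>n q. U (int n, q) = (if n \<le> q then U (0, q - n) * complex_of_real (bb (real (q - n) - a) (int n)) else 0)"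
    by (rule lw_form[OF U0 F0]) auto
  obtain j where j: "U (0,j) \<noteq> 0"
  proof (rule ccontr)
    assume "\<not> thesis"
    then have z: "\<And>j. U (0,j) = 0" using that by blast
    have "u x = 0" for x
    proof -
      obtain p q where x: "x = (p,q)" by (cases x)
      show ?thesis
      proof (cases "p \<ge> 0")
        case True
        then have "U (int (nat p), q) = 0" using lwf[of "nat p" q] z by simp
        then show ?thesis using uc True x by (simp add: conv_def)
      next
        case False then show ?thesis using uc x by (simp add: conv_def)
      qed
    qed
    then show False using nz by auto
  qed
  define m where "m = j"
  have n0: "n0 = - int m" using wt[OF j] by (simp add: m_def)
  define c where "c = U (0,m)"
  have c: "c \<noteq> 0" using j by (simp add: c_def m_def)
  have other: "\<And>j'. j' \<noteq> m \<Longrightarrow> U (0,j') = 0" using wt n0 by force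
  have form: "\<And>p q. p \<ge> 0 \<Longrightarrow> U (p,q) = (if int q = p + int m then c * of_real (bb (real m - a) p) else 0)"
  proof -
    fix p :: int and q :: nat assume p: "p \<ge> 0"
    define n where "n = nat p"
    have pn: "p = int n" using p by (simp add: n_def)
    show "U (p,q) = (if int q = p + int m then c * of_real (bb (real m - a) p) else 0)"
    proof (cases "n \<le> q")
      case True
      show ?thesis
      proof (cases "q - n = m")
        case True': True
        then have "int q = p + int m" using True pn by simp
        moreover have "real (q - n) = real m" using True' by simp
        ultimately show ?thesis using lwf[of n q] True True' pn by (simp add: c_def)
      next
        case False
        then have "int q \<noteq> p + int m" using True pn by simp
        then show ?thesis using lwf[of n q] True False other pn by simp
      qed
    next
      case False
      then have "int q \<noteq> p + int m" using pn by simp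
      then show ?thesis using lwf[of n q] False pn by simp
    qed
  qed
  have sU: "gterm r a U summable_on UNIV" using uV uc Vspace_conv[OF r a, of U] by simp
  have "2 * (real m - a) + r + a < -1"
    by (rule line_extract[OF a r refl c form sU])
  then show ?thesis using n0 by simp
qed

lemma part2_if:
  assumes r: "r < 0" and a: "a < 0" and c1: "1 + r - a < 2 * of_int n0" and c2: "2 * n0 \<le> 0"
  shows "hilbert_submodule 0 (- complex_of_real a + complex_of_real r - 2 * of_int n0) 0 (complex_of_real r) a"
proof -
  define m where "m = nat (- n0)"
  have n0: "n0 = - int m" using c2 by (simp add: m_def)
  have lam: "a - r - 2 * real m > 0" using c1 n0 by simp
  have c2eq: "- complex_of_real a + complex_of_real r - 2 * of_int n0 = - complex_of_real (a - r - 2 * real m)"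
    using n0 by simp
  interpret setting r a m "- complex_of_real a + complex_of_real r - 2 * of_int n0"
    by unfold_locales (use r a lam c2eq in auto)
  show ?thesis by (rule hs_exists) (use c1 n0 in simp)
qed

theorem mainTheorem5:
  fixes a :: real and a1 a2 :: complex
  assumes ha: "a < 0"
    and hcases:
      "(a1 = 0 \<and> Im a2 = 0 \<and> Re a2 < 0)
       \<or> (\<exists>x y. -1 \<le> x \<and> x < 0 \<and> y > 0 \<and> a1 = Complex (-1 - x) y \<and> a2 = Complex x y)
       \<or> (Im a1 = 0 \<and> Im a2 = 0 \<and> -1 < Re a1 \<and> Re a1 < 0 \<and> -1 < Re a2 \<and> Re a2 < 0)"
  shows "(\<forall>lam::complex. hilbert_submodule 0 (- lam) a1 a2 a \<longrightarrow>
            (\<exists>n0::int. lam = a1 + of_real a - a2 + 2 * of_int n0))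
       \<and> (a1 = 0 \<longrightarrow> (\<forall>n0::int.
            hilbert_submodule 0 (- of_real a + a2 - 2 * of_int n0) a1 a2 a \<longleftrightarrow>
            (1 + Re a2 - a < 2 * of_int n0 \<and> 2 * n0 \<le> 0)))
       \<and> (a1 \<noteq> 0 \<longrightarrow> (\<forall>n0::int.
            \<not> hilbert_submodule 0 (- a1 - of_real a + a2 - 2 * of_int n0) a1 a2 a))"
proof (intro conjI impI allI)
  fix lam :: complex
  assume "hilbert_submodule 0 (- lam) a1 a2 a"
  then show "\<exists>n0::int. lam = a1 + of_real a - a2 + 2 * of_int n0" by (rule part1)
next
  fix n0 :: int
  assume a10: "a1 = 0"
  then have c1: "Im a2 = 0 \<and> Re a2 < 0" using hcases by (auto simp: complex_eq_iff)
  define r where "r = Re a2"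
  have a2r: "a2 = complex_of_real r" using c1 by (simp add: r_def complex_eq_iff)
  have r: "r < 0" using c1 by (simp add: r_def)
  show "hilbert_submodule 0 (- of_real a + a2 - 2 * of_int n0) a1 a2 a \<longleftrightarrow>
            (1 + Re a2 - a < 2 * of_int n0 \<and> 2 * n0 \<le> 0)"
    unfolding a10 a2r using part2_only_if[OF r ha] part2_if[OF r ha] by auto
next
  fix n0 :: int
  assume a1n: "a1 \<noteq> 0"
  have nint: "a1 \<notin> \<int> \<and> a2 \<notin> \<int>"
  proof -
    from hcases a1n consider
        (c2) x y where "-1 \<le> x" "x < 0" "y > 0" "a1 = Complex (-1 - x) y" "a2 = Complex x y"
      | (c3) "Im a1 = 0" "Im a2 = 0" "-1 < Re a1" "Re a1 < 0" "-1 < Re a2" "Re a2 < 0"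
      by blast
    then show ?thesis
    proof cases
      case c2
      then show ?thesis by (auto simp: complex_is_Int_iff)
    next
      case c3
      have "z \<notin> \<int>" if "-1 < Re z" "Re z < 0" for z :: complex
      proof
        assume "z \<in> \<int>"
        then obtain i where "Re z = of_int i" by (auto simp: complex_is_Int_iff)
        then have "(-1::real) < of_int i" "of_int i < (0::real)" using that by auto
        then have "-1 < i" "i < 0" by linarith+
        then show False by linarith
      qed
      then show ?thesis using c3 by auto
    qed
  qed
  then show "\<not> hilbert_submodule 0 (- a1 - of_real a + a2 - 2 * of_int n0) a1 a2 a"
    by (intro part3_core) auto
qed


end
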